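(* In the trilevel setting, assume $\limsup_{k\to\infty}\beta_k/\alpha_k=0$, $\alpha_k\to0$, $\sum_k\alpha_k=\infty$, and $\limsup_{k\to\infty}\frac{|\beta_k-\beta_{k-1}|+|\alpha_k-\alpha_{k-1}|}{\alpha_k\beta_k}=0$. Then the trilevel iteration sequence $\{x^k\}$ converges to the unique $x^*\in\mathrm{Fix}(W)$ satisfying \[\langle x^*-S(x^* ),x-x^*\rangle\ge0\quad\forall x\in\mathrm{Fix}(W),\] i.e. $\omega(x^* )=\min_{x\in Y^*}\omega(x)$.
   Context: Trilevel setting. Let $f_1,f_2:\mathbb R^n\to\mathbb R$ be convex and continuously differentiable with $L_{f_i}$-Lipschitz gradients, and $g_1,g_2:\mathbb R^n\to(-\infty,+\infty]$ proper, lower semicontinuous and convex; put $\phi_i=f_i+g_i$. Let $\omega:\mathbb R^n\to\mathbb R$ be $\mu$-strongly convex and continuously differentiable with $L_\omega$-Lipschitz gradient. Let $Y^*=\arg\min_{x\in\mathbb R^n}\phi_2(x)$ and $X^*=\arg\min_{x\in Y^*}\phi_1(x)$, both assumed nonempty. For a proper lsc convex $g$, $\mathrm{prox}_g(x)=\arg\min_{u}\{g(u)+\tfrac12\|u-x\|^2\}$. Fix $u\in(0,\tfrac{2}{L_\omega+\mu}]$, $t\in(0,1/L_{f_1}]$, $s\in(0,1/L_{f_2}]$ and define $S(x)=x-u\nabla\omega(x)$, $T(x)=\mathrm{prox}_{tg_1}(x-t\nabla f_1(x))$, $W(x)=\mathrm{prox}_{sg_2}(x-s\nabla f_2(x))$.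 Then $S$ is a contraction with constant $r=\sqrt{1-\tfrac{2u\mu L_\omega}{\mu+L_\omega}}\in[0,1)$, $T,W$ are nonexpansive, $\mathrm{Fix}(W)=Y^*$. Given $x^0\in\mathbb R^n$ and real sequences $\alpha_k,\beta_k\in(0,1)$, the trilevel iteration sequence is $x^{k+1}=\alpha_kS(x^k)+(1-\alpha_k)\beta_kT(x^k)+(1-\alpha_k)(1-\beta_k)W(x^k)$, $k\ge0$. *)

theory Defs
  imports "HOL-Analysis.Analysis"
begin

definition proper_fun :: "('a \<Rightarrow> ereal) \<Rightarrow> bool" where
  "proper_fun g \<longleftrightarrow> (\<forall>x. g x \<noteq> -\<infinity>) \<and> (\<exists>x. g x \<noteq> \<infinity>)"

definition lsc_fun :: "('a::topological_space \<Rightarrow> ereal) \<Rightarrow> bool" where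
  "lsc_fun g \<longleftrightarrow> (\<forall>x. g x \<le> Liminf (at x) g)"

definition convex_ereal_fun :: "('a::real_vector \<Rightarrow> ereal) \<Rightarrow> bool" where
  "convex_ereal_fun g \<longleftrightarrow>
     (\<forall>x y (l::real). 0 \<le> l \<and> l \<le> 1 \<longrightarrow>
        g ((1 - l) *\<^sub>R x + l *\<^sub>R y) \<le> ereal (1 - l) * g x + ereal l * g y)"

definition strongly_convex :: "real \<Rightarrow> ('a::real_inner \<Rightarrow> real) \<Rightarrow> bool" where
  "strongly_convex \<mu> w \<longleftrightarrow> convex_on UNIV (\<lambda>x. w x - (\<mu> / 2) * (norm x)\<^sup>2)"

definition prox :: "('a::real_normed_vector \<Rightarrow> ereal) \<Rightarrow> 'a \<Rightarrow> 'a" where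
  "prox g x = (THE u. \<forall>v. g u + ereal ((norm (u - x))\<^sup>2 / 2) \<le> g v + ereal ((norm (v - x))\<^sup>2 / 2))"

definition argmin_on :: "('a \<Rightarrow> ereal) \<Rightarrow> 'a set \<Rightarrow> 'a set" where
  "argmin_on h A = {x \<in> A. \<forall>y\<in>A. h x \<le> h y}"

end

theory Submission
  imports Defs
begin

lemma line_deriv:
  fixes h :: "'a::real_inner \<Rightarrow> real"
  assumes hd: "\<And>y. (h has_derivative (\<lambda>v. G y \<bullet> v)) (at y)"
  shows "((\<lambda>t. h (x + t *\<^sub>R d)) has_real_derivative (G (x + t *\<^sub>R d) \<bullet> d)) (at t)"
proof -
  have l: "((\<lambda>t. x + t *\<^sub>R d) has_derivative (\<lambda>s. s *\<^sub>R d)) (at t)"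
    by (auto intro!: derivative_eq_intros)
  have "((\<lambda>t. h (x + t *\<^sub>R d)) has_derivative (\<lambda>s. G (x + t *\<^sub>R d) \<bullet> (s *\<^sub>R d))) (at t)"
    using has_derivative_compose[OF l hd] by (simp add: o_def)
  moreover have "(\<lambda>s. G (x + t *\<^sub>R d) \<bullet> (s *\<^sub>R d)) = (*) (G (x + t *\<^sub>R d) \<bullet> d)"
    by (auto simp: mult.commute)
  ultimately show ?thesis by (simp add: has_field_derivative_def)
qed

lemma tangent_ineq:
  fixes h :: "'a::real_inner \<Rightarrow> real"
  assumes cv: "convex_on UNIV h"
    and hd: "\<And>y. (h has_derivative (\<lambda>v. G y \<bullet> v)) (at y)"
  shows "h y \<ge> h x + G x \<bullet> (y - x)"
proof -
  define d where "d = y - x"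
  define \<phi> where "\<phi> t = h (x + t *\<^sub>R d)" for t
  have "convex_on UNIV \<phi>"
    unfolding \<phi>_def
  proof (rule convex_onI)
    fix a s t :: real assume a: "0 < a" "a < 1"
    have "x + ((1 - a) *\<^sub>R s + a *\<^sub>R t) *\<^sub>R d = (1 - a) *\<^sub>R (x + s *\<^sub>R d) + a *\<^sub>R (x + t *\<^sub>R d)"
      by (simp add: algebra_simps)
    then show "h (x + ((1 - a) *\<^sub>R s + a *\<^sub>R t) *\<^sub>R d) \<le> (1 - a) * h (x + s *\<^sub>R d) + a * h (x + t *\<^sub>R d)"
      using convex_onD[OF cv, of a "x + s *\<^sub>R d" "x + t *\<^sub>R d"] a by simp
  qed simp
  moreover have "(\<phi> has_real_derivative (G x \<bullet> d)) (at 0)"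
    using line_deriv[OF hd, where x=x and t=0 and d=d] unfolding \<phi>_def by simp
  ultimately have "\<phi> 1 - \<phi> 0 \<ge> (G x \<bullet> d) * (1 - 0)"
    by (intro convex_on_imp_above_tangent[where A=UNIV]) auto
  then show ?thesis by (simp add: \<phi>_def d_def)
qed

lemma descent_ineq:
  fixes h :: "'a::real_inner \<Rightarrow> real"
  assumes hd: "\<And>y. (h has_derivative (\<lambda>v. G y \<bullet> v)) (at y)"
    and lip: "L-lipschitz_on UNIV G"
  shows "h y \<le> h x + G x \<bullet> (y - x) + L / 2 * (norm (y - x))\<^sup>2"
proof -
  define d where "d = y - x"
  define \<psi> where "\<psi> t = h (x + t *\<^sub>R d) - t * (G x \<bullet> d) - L / 2 * t\<^sup>2 * (norm d)\<^sup>2" for t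
  have der: "(\<psi> has_real_derivative (G (x + t *\<^sub>R d) \<bullet> d - G x \<bullet> d - L * t * (norm d)\<^sup>2)) (at t)" for t
    unfolding \<psi>_def
    by (rule derivative_eq_intros line_deriv[OF hd] refl | simp)+
  have "\<psi> 1 \<le> \<psi> 0"
  proof (rule DERIV_nonpos_imp_decreasing_open[of 0 1 \<psi>])
    fix t :: real assume t: "0 < t" "t < 1"
    have e1: "G (x + t *\<^sub>R d) \<bullet> d - G x \<bullet> d = (G (x + t *\<^sub>R d) - G x) \<bullet> d"
      by (simp add: inner_diff_left)
    have e2: "(G (x + t *\<^sub>R d) - G x) \<bullet> d \<le> norm (G (x + t *\<^sub>R d) - G x) * norm d"
      by (rule norm_cauchy_schwarz)
    have e3: "norm (G (x + t *\<^sub>R d) - G x) \<le> L * (t * norm d)"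
      using lipschitz_onD[OF lip, of "x + t *\<^sub>R d" x] t by (simp add: dist_norm)
    hence "norm (G (x + t *\<^sub>R d) - G x) * norm d \<le> L * (t * norm d) * norm d"
      by (simp add: mult_right_mono)
    also have "L * (t * norm d) * norm d = L * t * (norm d)\<^sup>2" by (simp add: power2_eq_square)
    finally have "G (x + t *\<^sub>R d) \<bullet> d - G x \<bullet> d - L * t * (norm d)\<^sup>2 \<le> 0" using e1 e2 by linarith
    with der[of t] show "\<exists>y. DERIV \<psi> t :> y \<and> y \<le> 0" by blast
  next
    show "continuous_on {0..1} \<psi>"
      by (meson der DERIV_isCont continuous_at_imp_continuous_on)
  qed simp
  then show ?thesis by (simp add: \<psi>_def d_def)
qed

lemma norm_sub_scale_sq:
  fixes a b :: "'a::real_inner"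
  shows "(norm (a - t *\<^sub>R b))\<^sup>2 = (norm a)\<^sup>2 - 2 * t * (b \<bullet> a) + t\<^sup>2 * (norm b)\<^sup>2"
  unfolding power2_norm_eq_inner by (simp add: inner_diff_left inner_diff_right inner_commute algebra_simps power2_eq_square)

lemma aux_lin: "(a::real) + gz \<le> b + gy + e \<Longrightarrow> gz = p - q \<Longrightarrow> gy = - r \<Longrightarrow> e = n / 2 \<Longrightarrow> n = r - q
  \<Longrightarrow> f = n / 2 \<Longrightarrow> a + p + f \<le> b" by linarith

lemma cocoercive:
  fixes h :: "'a::real_inner \<Rightarrow> real"
  assumes tang: "\<And>x y. h y \<ge> h x + G x \<bullet> (y - x)"
    and desc: "\<And>x y. h y \<le> h x + G x \<bullet> (y - x) + M / 2 * (norm (y - x))\<^sup>2"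
    and M: "M > 0"
  shows "M * ((G x - G y) \<bullet> (x - y)) \<ge> (norm (G x - G y))\<^sup>2"
proof -
  have key: "h y \<ge> h x + G x \<bullet> (y - x) + 1 / (2 * M) * (norm (G y - G x))\<^sup>2" for x y
  proof -
    define z where "z = y - (1 / M) *\<^sub>R (G y - G x)"
    have "h z \<ge> h x + G x \<bullet> (z - x)" by (rule tang)
    moreover have "h z \<le> h y + G y \<bullet> (z - y) + M / 2 * (norm (z - y))\<^sup>2" by (rule desc)
    ultimately have "h x + G x \<bullet> (z - x) \<le> h y + G y \<bullet> (z - y) + M / 2 * (norm (z - y))\<^sup>2"
      by linarith
    moreover have "G x \<bullet> (z - x) = G x \<bullet> (y - x) - (1/M) * (G x \<bullet> (G y - G x))"
      by (simp add: z_def inner_diff_right algebra_simps)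
    moreover have "G y \<bullet> (z - y) = - ((1/M) * (G y \<bullet> (G y - G x)))"
      by (simp add: z_def inner_diff_right algebra_simps)
    moreover have "norm (z - y) = (1/M) * norm (G y - G x)"
      using M by (simp add: z_def)
    hence "M / 2 * (norm (z - y))\<^sup>2 = (1/M) * (norm (G y - G x))\<^sup>2 / 2"
      using M by (simp add: power2_eq_square field_simps)
    moreover have "(norm (G y - G x))\<^sup>2 = G y \<bullet> (G y - G x) - G x \<bullet> (G y - G x)"
      by (simp add: power2_norm_eq_inner inner_diff_left)
    hence "(1/M) * (norm (G y - G x))\<^sup>2 = (1/M) * (G y \<bullet> (G y - G x)) - (1/M) * (G x \<bullet> (G y - G x))"
      by (simp add: right_diff_distrib)
    moreover have "1 / (2 * M) * (norm (G y - G x))\<^sup>2 = (1/M) * (norm (G y - G x))\<^sup>2 / 2" by simp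
    ultimately show ?thesis using aux_lin by metis
  qed
  have "h y \<ge> h x + G x \<bullet> (y - x) + 1 / (2 * M) * (norm (G y - G x))\<^sup>2"
       "h x \<ge> h y + G y \<bullet> (x - y) + 1 / (2 * M) * (norm (G x - G y))\<^sup>2"
    by (rule key)+
  moreover have "norm (G y - G x) = norm (G x - G y)" by (rule norm_minus_commute)
  moreover have "(G x - G y) \<bullet> (x - y) = - (G x \<bullet> (y - x)) - G y \<bullet> (x - y)"
    by (simp add: inner_diff algebra_simps)
  moreover have "1 / M * (norm (G x - G y))\<^sup>2 = 2 * (1 / (2 * M) * (norm (G x - G y))\<^sup>2)" by simp
  ultimately have "1 / M * (norm (G x - G y))\<^sup>2 \<le> (G x - G y) \<bullet> (x - y)" by (smt (verit))
  then show ?thesis using M by (simp add: field_simps)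
qed

lemma grad_step_nonexp:
  fixes f :: "'a::real_inner \<Rightarrow> real"
  assumes cv: "convex_on UNIV f"
    and fd: "\<And>y. (f has_derivative (\<lambda>v. df y \<bullet> v)) (at y)"
    and lip: "M-lipschitz_on UNIV df" and M: "M > 0"
    and t: "0 < t" "t \<le> 1 / M"
  shows "norm ((x - t *\<^sub>R df x) - (y - t *\<^sub>R df y)) \<le> norm (x - y)"
proof -
  have co: "M * ((df x - df y) \<bullet> (x - y)) \<ge> (norm (df x - df y))\<^sup>2"
    by (rule cocoercive[OF tangent_ineq[OF cv fd] descent_ineq[OF fd lip] M])
  define D where "D = df x - df y"
  define e where "e = x - y"
  have eq: "(x - t *\<^sub>R df x) - (y - t *\<^sub>R df y) = e - t *\<^sub>R D"
    by (simp add: D_def e_def algebra_simps)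
  have "(norm (e - t *\<^sub>R D))\<^sup>2 = (norm e)\<^sup>2 - 2 * t * (D \<bullet> e) + t\<^sup>2 * (norm D)\<^sup>2"
    by (rule norm_sub_scale_sq)
  also have "t\<^sup>2 * (norm D)\<^sup>2 \<le> t * (1/M) * (norm D)\<^sup>2"
  proof -
    have "t * t \<le> t * (1/M)" by (rule mult_left_mono) (use t in auto)
    then show ?thesis by (metis mult_right_mono zero_le_power2 power2_eq_square)
  qed
  also have "t * (1/M) * (norm D)\<^sup>2 \<le> t * (1/M) * (M * (D \<bullet> e))"
    using co unfolding D_def e_def by (intro mult_left_mono) (use t M in auto)
  also have "t * (1/M) * (M * (D \<bullet> e)) = t * (D \<bullet> e)" using M by simp
  finally have "(norm (e - t *\<^sub>R D))\<^sup>2 \<le> (norm e)\<^sup>2 - t * (D \<bullet> e)" by simp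
  moreover have "t * (D \<bullet> e) \<ge> 0"
    using co M t by (smt (verit, best) D_def e_def mult_nonneg_nonneg zero_le_mult_iff zero_le_power2)
  ultimately have "(norm (e - t *\<^sub>R D))\<^sup>2 \<le> (norm e)\<^sup>2" by linarith
  then have "norm (e - t *\<^sub>R D) \<le> norm e" by (rule power2_le_imp_le) simp
  then show ?thesis unfolding eq e_def .
qed

lemma strong_props:
  fixes \<omega> :: "'a::euclidean_space \<Rightarrow> real"
  assumes sc: "strongly_convex \<mu> \<omega>"
    and wd: "\<And>y. (\<omega> has_derivative (\<lambda>v. d\<omega> y \<bullet> v)) (at y)"
    and lip: "L-lipschitz_on UNIV d\<omega>" and mu: "\<mu> > 0" and L: "L > 0"
  shows "\<And>x y. \<omega> y \<ge> \<omega> x + d\<omega> x \<bullet> (y - x) + \<mu> / 2 * (norm (y - x))\<^sup>2"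
    and "\<And>x y. (d\<omega> x - d\<omega> y) \<bullet> (x - y) \<ge> \<mu> * (norm (x - y))\<^sup>2"
    and "\<mu> \<le> L"
    and "\<And>x y. (L + \<mu>) * ((d\<omega> x - d\<omega> y) \<bullet> (x - y)) \<ge> (norm (d\<omega> x - d\<omega> y))\<^sup>2 + \<mu> * L * (norm (x - y))\<^sup>2"
proof -
  define h where "h x = \<omega> x - \<mu> / 2 * (x \<bullet> x)" for x
  define G where "G x = d\<omega> x - \<mu> *\<^sub>R x" for x
  have hcv: "convex_on UNIV h"
    using sc unfolding strongly_convex_def h_def by (simp add: power2_norm_eq_inner)
  have hd: "(h has_derivative (\<lambda>v. G y \<bullet> v)) (at y)" for y
  proof -
    show ?thesis
      unfolding h_def by (auto intro!: derivative_eq_intros wd simp: G_def inner_diff_left inner_commute algebra_simps)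
  qed
  have tang: "h y \<ge> h x + G x \<bullet> (y - x)" for x y by (rule tangent_ineq[OF hcv hd])
  have nsq: "(norm (y - x))\<^sup>2 = y \<bullet> y - 2 * (x \<bullet> (y - x)) - x \<bullet> x" for x y :: 'a
    by (simp add: power2_norm_eq_inner inner_diff inner_commute algebra_simps)
  show t1: "\<omega> y \<ge> \<omega> x + d\<omega> x \<bullet> (y - x) + \<mu> / 2 * (norm (y - x))\<^sup>2" for x y
    using tang[of x y] unfolding h_def G_def nsq[where x=x and y=y]
    by (simp add: inner_diff_left inner_diff_right algebra_simps)
  show mono: "(d\<omega> x - d\<omega> y) \<bullet> (x - y) \<ge> \<mu> * (norm (x - y))\<^sup>2" for x y
  proof -
    have "\<omega> y \<ge> \<omega> x + d\<omega> x \<bullet> (y - x) + \<mu> / 2 * (norm (y - x))\<^sup>2" by (rule t1)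
    moreover have "\<omega> x \<ge> \<omega> y + d\<omega> y \<bullet> (x - y) + \<mu> / 2 * (norm (x - y))\<^sup>2" by (rule t1)
    moreover have "\<mu> / 2 * (norm (y - x))\<^sup>2 = \<mu> / 2 * (norm (x - y))\<^sup>2" by (simp add: norm_minus_commute)
    moreover have "(d\<omega> x - d\<omega> y) \<bullet> (x - y) = - (d\<omega> x \<bullet> (y - x)) - d\<omega> y \<bullet> (x - y)"
      by (simp add: inner_diff algebra_simps)
    moreover have "\<mu> / 2 * (norm (x - y))\<^sup>2 + \<mu> / 2 * (norm (x - y))\<^sup>2 = \<mu> * (norm (x - y))\<^sup>2" by simp
    ultimately show ?thesis by linarith
  qed
  have lipn: "norm (d\<omega> x - d\<omega> y) \<le> L * norm (x - y)" for x y
    using lipschitz_onD[OF lip, of x y] by (simp add: dist_norm)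
  show muL: "\<mu> \<le> L"
  proof -
    obtain b :: 'a where b: "b \<in> Basis" using nonempty_Basis by blast
    hence nb: "norm b = 1" by simp
    have "\<mu> * (norm (b - 0))\<^sup>2 \<le> (d\<omega> b - d\<omega> 0) \<bullet> (b - 0)" by (rule mono)
    also have "\<dots> \<le> norm (d\<omega> b - d\<omega> 0) * norm (b - 0)" by (rule norm_cauchy_schwarz)
    also have "\<dots> \<le> L * norm (b - 0) * norm (b - 0)"
      using lipn[of b 0] by (simp add: mult_right_mono)
    finally show ?thesis using nb by simp
  qed
  show "(L + \<mu>) * ((d\<omega> x - d\<omega> y) \<bullet> (x - y)) \<ge> (norm (d\<omega> x - d\<omega> y))\<^sup>2 + \<mu> * L * (norm (x - y))\<^sup>2" for x y
  proof (cases "\<mu> < L")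
    case True
    have desc: "h z \<le> h w + G w \<bullet> (z - w) + (L - \<mu>) / 2 * (norm (z - w))\<^sup>2" for w z
    proof -
      have "\<omega> z \<le> \<omega> w + d\<omega> w \<bullet> (z - w) + L / 2 * (norm (z - w))\<^sup>2"
        by (rule descent_ineq[OF wd lip])
      then show ?thesis unfolding h_def G_def nsq[where x=w and y=z]
        by (simp add: inner_diff_left inner_diff_right algebra_simps) (simp add: field_simps)
    qed
    have co: "(L - \<mu>) * ((G x - G y) \<bullet> (x - y)) \<ge> (norm (G x - G y))\<^sup>2"
      by (rule cocoercive[OF tang desc]) (use True in simp)
    define D where "D = d\<omega> x - d\<omega> y"
    define e where "e = x - y"
    have "G x - G y = D - \<mu> *\<^sub>R e" by (simp add: G_def D_def e_def algebra_simps)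
    hence n1: "(norm (G x - G y))\<^sup>2 = (norm D)\<^sup>2 - 2 * \<mu> * (e \<bullet> D) + \<mu>\<^sup>2 * (norm e)\<^sup>2"
      using norm_sub_scale_sq[of D \<mu> e] by simp
    have i1: "(G x - G y) \<bullet> (x - y) = D \<bullet> e - \<mu> * (norm e)\<^sup>2"
      using \<open>G x - G y = D - \<mu> *\<^sub>R e\<close> by (simp add: e_def[symmetric] inner_diff_left power2_norm_eq_inner)
    have "(L - \<mu>) * (D \<bullet> e - \<mu> * (norm e)\<^sup>2) \<ge> (norm D)\<^sup>2 - 2 * \<mu> * (D \<bullet> e) + \<mu>\<^sup>2 * (norm e)\<^sup>2"
      using co n1 i1 by (simp add: inner_commute)
    hence "(L + \<mu>) * (D \<bullet> e) \<ge> (norm D)\<^sup>2 + \<mu> * L * (norm e)\<^sup>2"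
      by (simp add: algebra_simps power2_eq_square)
    then show ?thesis by (simp add: D_def e_def)
  next
    case False
    hence Lm: "L = \<mu>" using muL by simp
    have a: "\<mu> * (norm (x - y))\<^sup>2 \<le> (d\<omega> x - d\<omega> y) \<bullet> (x - y)" by (rule mono)
    have b: "(norm (d\<omega> x - d\<omega> y))\<^sup>2 \<le> (L * norm (x - y))\<^sup>2"
      using lipn[of x y] by (simp add: power_mono)
    have "(norm (d\<omega> x - d\<omega> y))\<^sup>2 + \<mu> * L * (norm (x - y))\<^sup>2 \<le> 2 * \<mu> * (\<mu> * (norm (x - y))\<^sup>2)"
      using b Lm by (simp add: power2_eq_square algebra_simps)
    also have "\<dots> \<le> 2 * \<mu> * ((d\<omega> x - d\<omega> y) \<bullet> (x - y))"
      using a mu by (simp add: mult_left_mono)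
    finally show ?thesis using Lm by simp
  qed
qed

lemma contraction_S:
  fixes \<omega> :: "'a::euclidean_space \<Rightarrow> real"
  assumes sc: "strongly_convex \<mu> \<omega>"
    and wd: "\<And>y. (\<omega> has_derivative (\<lambda>v. d\<omega> y \<bullet> v)) (at y)"
    and lip: "L-lipschitz_on UNIV d\<omega>" and mu: "\<mu> > 0" and L: "L > 0"
    and u: "0 < u" "u \<le> 2 / (L + \<mu>)"
  shows "\<exists>r. 0 \<le> r \<and> r < 1 \<and> (\<forall>x y. norm ((x - u *\<^sub>R d\<omega> x) - (y - u *\<^sub>R d\<omega> y)) \<le> r * norm (x - y))"
proof -
  note P = strong_props[OF sc wd lip mu L]
  define k where "k = 2 * u / (L + \<mu>)"
  define c where "c = 1 - k * \<mu> * L"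
  have Lmu: "L + \<mu> > 0" using mu L by simp
  have k0: "k > 0" using u Lmu by (simp add: k_def)
  have uk: "u * u \<le> k"
  proof -
    have "u * u \<le> u * (2 / (L + \<mu>))" by (rule mult_left_mono) (use u in auto)
    also have "u * (2 / (L + \<mu>)) = k" by (simp add: k_def)
    finally show ?thesis .
  qed
  have sq: "4 * \<mu> * L \<le> (L + \<mu>)\<^sup>2"
  proof -
    have "(L + \<mu>)\<^sup>2 - 4 * \<mu> * L = (L - \<mu>)\<^sup>2" by (simp add: power2_eq_square algebra_simps)
    then show ?thesis using zero_le_power2[of "L - \<mu>"] by linarith
  qed
  have "k * \<mu> * L \<le> (2 / (L + \<mu>)) * 2 / (L + \<mu>) * \<mu> * L"
    using u mu L Lmu unfolding k_def by (intro mult_right_mono divide_right_mono) auto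
  also have "\<dots> = 4 * \<mu> * L / (L + \<mu>)\<^sup>2" by (simp add: power2_eq_square)
  also have "\<dots> \<le> 1" using sq Lmu by simp
  finally have c0: "c \<ge> 0" by (simp add: c_def)
  have c1: "c < 1" using k0 mu L by (simp add: c_def)
  show ?thesis
  proof (intro exI[of _ "sqrt c"] conjI allI)
    show "0 \<le> sqrt c" using c0 by simp
    show "sqrt c < 1" using c1 c0 by simp
    fix x y :: 'a
    define D where "D = d\<omega> x - d\<omega> y"
    define e where "e = x - y"
    have co: "(L + \<mu>) * (D \<bullet> e) \<ge> (norm D)\<^sup>2 + \<mu> * L * (norm e)\<^sup>2"
      using P(4)[of x y] by (simp add: D_def e_def)
    have eq: "(x - u *\<^sub>R d\<omega> x) - (y - u *\<^sub>R d\<omega> y) = e - u *\<^sub>R D"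
      by (simp add: D_def e_def algebra_simps)
    have "(norm (e - u *\<^sub>R D))\<^sup>2 = (norm e)\<^sup>2 - 2 * u * (D \<bullet> e) + u\<^sup>2 * (norm D)\<^sup>2"
      by (rule norm_sub_scale_sq)
    also have "2 * u * (D \<bullet> e) \<ge> k * ((norm D)\<^sup>2 + \<mu> * L * (norm e)\<^sup>2)"
    proof -
      have "k * ((norm D)\<^sup>2 + \<mu> * L * (norm e)\<^sup>2) \<le> k * ((L + \<mu>) * (D \<bullet> e))"
        using co k0 by (simp add: mult_left_mono)
      also have "\<dots> = 2 * u * (D \<bullet> e)" using Lmu by (simp add: k_def)
      finally show ?thesis .
    qed
    hence "(norm e)\<^sup>2 - 2 * u * (D \<bullet> e) + u\<^sup>2 * (norm D)\<^sup>2 \<le>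
        (norm e)\<^sup>2 - k * ((norm D)\<^sup>2 + \<mu> * L * (norm e)\<^sup>2) + u\<^sup>2 * (norm D)\<^sup>2" by simp
    also have "\<dots> = c * (norm e)\<^sup>2 + (u * u - k) * (norm D)\<^sup>2"
      by (simp add: c_def algebra_simps power2_eq_square)
    also have "\<dots> \<le> c * (norm e)\<^sup>2"
    proof -
      have "u * u - k \<le> 0" using uk by simp
      then show ?thesis by (simp add: mult_nonpos_nonneg)
    qed
    finally have "(norm (e - u *\<^sub>R D))\<^sup>2 \<le> (sqrt c * norm e)\<^sup>2"
      using c0 by (simp add: power_mult_distrib)
    then have "norm (e - u *\<^sub>R D) \<le> sqrt c * norm e"
      using c0 by (simp add: power2_le_iff_abs_le)
    then show "norm ((x - u *\<^sub>R d\<omega> x) - (y - u *\<^sub>R d\<omega> y)) \<le> sqrt c * norm (x - y)"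
      unfolding eq e_def .
  qed
qed

definition lscn :: "('a::topological_space \<Rightarrow> ereal) \<Rightarrow> bool" where
  "lscn F \<longleftrightarrow> (\<forall>v b. b < F v \<longrightarrow> eventually (\<lambda>w. b < F w) (nhds v))"

lemma lsc_imp_lscn: "lsc_fun g \<Longrightarrow> lscn g"
  unfolding lsc_fun_def lscn_def
proof (intro allI impI)
  fix v b assume l: "\<forall>x. g x \<le> Liminf (at x) g" and b: "b < g v"
  have "eventually (\<lambda>w. b < g w) (at v)"
    using l[rule_format, of v] b le_Liminf_iff by blast
  then show "eventually (\<lambda>w. b < g w) (nhds v)"
    using b by (simp add: eventually_nhds_conv_at)
qed

lemma lscn_min_compact:
  assumes F: "lscn F" and K: "compact K" "K \<noteq> {}"
  shows "\<exists>p\<in>K. \<forall>v\<in>K. F p \<le> F v"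
proof (rule ccontr)
  assume "\<not> ?thesis"
  hence "\<forall>p\<in>K. \<exists>v\<in>K. F v < F p" by (auto simp: not_le)
  then obtain V where V: "\<And>p. p \<in> K \<Longrightarrow> V p \<in> K \<and> F (V p) < F p" by metis
  have "\<forall>p\<in>K. \<exists>U. open U \<and> p \<in> U \<and> (\<forall>w\<in>U. F (V p) < F w)"
  proof
    fix p assume p: "p \<in> K"
    have "eventually (\<lambda>w. F (V p) < F w) (nhds p)"
      using F V[OF p] unfolding lscn_def by blast
    then show "\<exists>U. open U \<and> p \<in> U \<and> (\<forall>w\<in>U. F (V p) < F w)"
      unfolding eventually_nhds by blast
  qed
  then obtain U where U: "\<And>p. p \<in> K \<Longrightarrow> open (U p) \<and> p \<in> U p \<and> (\<forall>w\<in>U p. F (V p) < F w)"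
    by metis
  obtain C' where C': "C' \<subseteq> K" "finite C'" "K \<subseteq> (\<Union>c\<in>C'. U c)"
    by (rule compactE_image[OF K(1), of K U]) (use U in auto)
  have "C' \<noteq> {}" using C'(3) K(2) by auto
  define m where "m = Min ((\<lambda>p. F (V p)) ` C')"
  have "m \<in> (\<lambda>p. F (V p)) ` C'" unfolding m_def by (rule Min_in) (use C' \<open>C' \<noteq> {}\<close> in auto)
  then obtain q where q: "q \<in> C'" "m = F (V q)" by auto
  have "V q \<in> K" using V q C' by auto
  then obtain p where p: "p \<in> C'" "V q \<in> U p" using C'(3) by auto
  have "F (V p) < F (V q)" using U[of p] p C' by auto
  moreover have "m \<le> F (V p)" unfolding m_def by (rule Min_le) (use C' p in auto)
  ultimately show False using q by simp
qed

lemma lscn_add_cont: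
  fixes F :: "'a::metric_space \<Rightarrow> ereal"
  assumes F: "lscn F" and nm: "\<And>v. F v \<noteq> -\<infinity>" and q: "continuous_on UNIV q"
  shows "lscn (\<lambda>v. F v + ereal (q v))"
  unfolding lscn_def
proof (intro allI impI)
  fix v and b :: ereal assume b: "b < F v + ereal (q v)"
  show "eventually (\<lambda>w. b < F w + ereal (q w)) (nhds v)"
  proof (cases b)
    case MInf
    have "-\<infinity> < F w + ereal (q w)" for w using nm[of w] by (cases "F w") auto
    then show ?thesis using MInf by (auto intro!: always_eventually)
  next
    case PInf then show ?thesis using b by simp
  next
    case (real r)
    have "ereal (r - q v) < F v" using b real
      by (cases "F v") auto
    then obtain r' where r': "ereal (r - q v) < ereal r'" "ereal r' < F v"
      using ereal_dense2 by blast
    have e1: "eventually (\<lambda>w. ereal r' < F w) (nhds v)" using F r'(2) unfolding lscn_def by blast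
    have "isCont q v" using q by (simp add: continuous_on_eq_continuous_at)
    hence "(q \<longlongrightarrow> q v) (at v)" by (simp add: isCont_def)
    moreover have "r - r' < q v" using r'(1) by simp
    ultimately have "eventually (\<lambda>w. r - r' < q w) (at v)" by (rule order_tendstoD(1))
    hence e2: "eventually (\<lambda>w. r - r' < q w) (nhds v)"
      using \<open>r - r' < q v\<close> by (simp add: eventually_nhds_conv_at)
    show ?thesis
    proof (rule eventually_mono[OF eventually_conj[OF e1 e2]])
      fix w assume w: "ereal r' < F w \<and> r - r' < q w"
      then show "b < F w + ereal (q w)" using real by (cases "F w") auto
    qed
  qed
qed

lemma small_slack:
  fixes a b e :: real
  assumes h: "\<And>l. 0 < l \<Longrightarrow> l < 1 \<Longrightarrow> a \<le> b + l * e" and e: "e \<ge> 0"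
  shows "a \<le> b"
proof (rule ccontr)
  assume "\<not> a \<le> b"
  hence ab: "a - b > 0" by simp
  define l where "l = min (1/2) ((a - b) / (2 * (e + 1)))"
  have l0: "l > 0" using ab e by (simp add: l_def)
  have l1: "l < 1" by (simp add: l_def)
  have "l * e \<le> ((a - b) / (2 * (e + 1))) * e"
    using e by (intro mult_right_mono) (auto simp: l_def)
  also have "\<dots> < a - b"
  proof -
    have "(a - b) * e < (a - b) * (2 * (e + 1))" using ab e by (intro mult_strict_left_mono) auto
    then show ?thesis using e by (simp add: field_simps)
  qed
  finally show False using h[OF l0 l1] by simp
qed

lemma ereal_conv_finite:
  assumes cv: "convex_ereal_fun g" and gx: "g x = ereal a" and gy: "g y = ereal b"
    and l: "0 \<le> l" "l \<le> 1" and nm: "\<And>v. g v \<noteq> -\<infinity>"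
  shows "\<exists>w. g ((1 - l) *\<^sub>R x + l *\<^sub>R y) = ereal w \<and> w \<le> (1 - l) * a + l * b"
proof -
  have "g ((1 - l) *\<^sub>R x + l *\<^sub>R y) \<le> ereal ((1 - l) * a + l * b)"
    using cv l unfolding convex_ereal_fun_def by (metis gx gy times_ereal.simps(1) plus_ereal.simps(1))
  moreover have "g ((1 - l) *\<^sub>R x + l *\<^sub>R y) \<noteq> -\<infinity>" by (rule nm)
  ultimately show ?thesis by (cases "g ((1 - l) *\<^sub>R x + l *\<^sub>R y)") auto
qed

lemma lscn_scale:
  assumes F: "lscn g" and nm: "\<And>v. g v \<noteq> -\<infinity>" and c: "c > 0"
  shows "lscn (\<lambda>v. ereal c * g v)"
  unfolding lscn_def
proof (intro allI impI)
  fix v and b :: ereal assume b: "b < ereal c * g v"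
  show "eventually (\<lambda>w. b < ereal c * g w) (nhds v)"
  proof (cases b)
    case MInf
    have "-\<infinity> < ereal c * g w" for w using nm[of w] c by (cases "g w") auto
    then show ?thesis using MInf by (auto intro!: always_eventually)
  next
    case PInf then show ?thesis using b by simp
  next
    case (real r)
    have "ereal (r / c) < g v" using b real c
      by (cases "g v") (auto simp: field_simps)
    hence "eventually (\<lambda>w. ereal (r / c) < g w) (nhds v)" using F unfolding lscn_def by blast
    then show ?thesis
    proof (rule eventually_mono)
      fix w assume "ereal (r / c) < g w"
      then show "b < ereal c * g w" using real c by (cases "g w") (auto simp: field_simps)
    qed
  qed
qed

lemma proper_nm: "proper_fun g \<Longrightarrow> g v \<noteq> -\<infinity>"
  unfolding proper_fun_def by blast

lemma growth:
  fixes g :: "'a::euclidean_space \<Rightarrow> ereal"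
  assumes pr: "proper_fun g" and ls: "lsc_fun g" and cv: "convex_ereal_fun g"
  shows "\<exists>A B. B \<ge> 0 \<and> (\<forall>v. ereal (A - B * norm v) \<le> g v)"
proof -
  have nm: "\<And>v. g v \<noteq> -\<infinity>" using pr by (rule proper_nm)
  obtain x0 where x0: "g x0 \<noteq> \<infinity>" using pr unfolding proper_fun_def by blast
  then obtain a0 where a0: "g x0 = ereal a0" using nm[of x0] by (cases "g x0") auto
  obtain p1 where p1: "p1 \<in> cball x0 1" "\<forall>v\<in>cball x0 1. g p1 \<le> g v"
    using lscn_min_compact[OF lsc_imp_lscn[OF ls], of "cball x0 1"] by auto
  have "g p1 \<le> g x0" using p1 by simp
  then obtain b1 where b1: "g p1 = ereal b1" "b1 \<le> a0"
    using nm[of p1] a0 by (cases "g p1") auto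
  define K where "K = a0 - b1"
  have K0: "K \<ge> 0" using b1 by (simp add: K_def)
  have main: "ereal (a0 - K * (1 + norm (v - x0))) \<le> g v" for v
  proof (cases "norm (v - x0) \<le> 1")
    case True
    hence "g p1 \<le> g v" using p1 by (simp add: dist_norm norm_minus_commute)
    moreover have "a0 - K * (1 + norm (v - x0)) \<le> b1"
    proof -
      have "0 \<le> K * norm (v - x0)" using K0 by simp
      then show ?thesis by (simp add: K_def algebra_simps)
    qed
    ultimately show ?thesis using b1 by (metis ereal_less_eq(3) order_trans)
  next
    case False
    define R where "R = norm (v - x0)"
    have R1: "R > 1" using False by (simp add: R_def)
    show ?thesis
    proof (cases "g v")
      case PInf then show ?thesis by simp
    next
      case MInf then show ?thesis using nm by simp
    next
      case (real gv)
      define l where "l = 1 / R"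
      have l: "0 \<le> l" "l \<le> 1" using R1 by (auto simp: l_def)
      define w where "w = (1 - l) *\<^sub>R x0 + l *\<^sub>R v"
      have "w - x0 = l *\<^sub>R (v - x0)" by (simp add: w_def algebra_simps)
      moreover have "v \<noteq> x0" using R1 by (auto simp: R_def)
      ultimately have "norm (w - x0) = 1" using R1 by (simp add: l_def R_def)
      hence "w \<in> cball x0 1" by (simp add: dist_norm norm_minus_commute)
      hence gw1: "g p1 \<le> g w" using p1 by simp
      obtain gw where gw: "g w = ereal gw" "gw \<le> (1 - l) * a0 + l * gv"
        using ereal_conv_finite[OF cv a0 real l nm] unfolding w_def by blast
      have "b1 \<le> (1 - l) * a0 + l * gv" using gw gw1 b1 by simp
      hence "R * b1 \<le> R * ((1 - l) * a0 + l * gv)" using R1 by (simp add: mult_left_mono)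
      also have "\<dots> = (R - 1) * a0 + gv" using R1 by (simp add: l_def field_simps)
      finally have "gv \<ge> a0 - K * R" by (simp add: K_def algebra_simps)
      moreover have "K * R \<le> K * (1 + R)" using K0 by (simp add: mult_left_mono)
      ultimately show ?thesis using real by (simp add: R_def)
    qed
  qed
  show ?thesis
  proof (intro exI conjI allI)
    show "K \<ge> 0" by (rule K0)
    fix v
    have "norm (v - x0) \<le> norm v + norm x0" by (rule norm_triangle_ineq4)
    hence "K * norm (v - x0) \<le> K * (norm v + norm x0)" using K0 by (rule mult_left_mono)
    hence "K * (1 + norm (v - x0)) \<le> K * (1 + norm x0) + K * norm v"
      by (simp add: algebra_simps)
    hence "ereal (a0 - K * (1 + norm x0) - K * norm v) \<le> ereal (a0 - K * (1 + norm (v - x0)))"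
      by simp
    then show "ereal (a0 - K * (1 + norm x0) - K * norm v) \<le> g v"
      using main[of v] by (rule order_trans)
  qed
qed

definition PF :: "real \<Rightarrow> ('a::real_normed_vector \<Rightarrow> ereal) \<Rightarrow> 'a \<Rightarrow> 'a \<Rightarrow> ereal" where
  "PF c g z v = ereal c * g v + ereal ((norm (v - z))\<^sup>2 / 2)"

lemma norm_add_scale_sq:
  fixes a b :: "'a::real_inner"
  shows "(norm (a + t *\<^sub>R b))\<^sup>2 = (norm a)\<^sup>2 + 2 * t * (b \<bullet> a) + t\<^sup>2 * (norm b)\<^sup>2"
  using norm_sub_scale_sq[of a "-t" b] by simp

lemma PF_finite: "g v = ereal gv \<Longrightarrow> PF c g z v = ereal (c * gv + (norm (v - z))\<^sup>2 / 2)"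
  by (simp add: PF_def)

lemma PF_inf: "c > 0 \<Longrightarrow> g v = \<infinity> \<Longrightarrow> PF c g z v = \<infinity>"
  by (simp add: PF_def)

lemma min_exists:
  fixes g :: "'a::euclidean_space \<Rightarrow> ereal"
  assumes pr: "proper_fun g" and ls: "lsc_fun g" and cv: "convex_ereal_fun g" and c: "c > 0"
  shows "\<exists>p. \<forall>v. PF c g z p \<le> PF c g z v"
proof -
  have nm: "\<And>v. g v \<noteq> -\<infinity>" using pr by (rule proper_nm)
  obtain A B where AB: "B \<ge> 0" "\<And>v. ereal (A - B * norm v) \<le> g v" using growth[OF pr ls cv] by blast
  have nm2: "ereal c * g v \<noteq> -\<infinity>" for v using nm[of v] c by (cases "g v") auto
  have lF: "lscn (PF c g z)"
    unfolding PF_def[abs_def]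
    by (rule lscn_add_cont[OF lscn_scale[OF lsc_imp_lscn[OF ls] nm c] nm2]) (auto intro!: continuous_intros)
  obtain x0 where "g x0 \<noteq> \<infinity>" using pr unfolding proper_fun_def by blast
  then obtain a0 where a0: "g x0 = ereal a0" using nm[of x0] by (cases "g x0") auto
  define M0 where "M0 = c * a0 + (norm (x0 - z))\<^sup>2 / 2"
  have PF0: "PF c g z x0 = ereal M0" using a0 by (simp add: PF_finite M0_def)
  have lb: "ereal (c * (A - B * norm v) + (norm (v - z))\<^sup>2 / 2) \<le> PF c g z v" for v
  proof (cases "g v")
    case (real gv)
    have "A - B * norm v \<le> gv" using AB(2)[of v] real by simp
    hence "c * (A - B * norm v) \<le> c * gv" using c by (simp add: mult_left_mono)
    then show ?thesis using real by (simp add: PF_finite)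
  qed (use nm c in \<open>auto simp: PF_inf\<close>)
  define R0 where "R0 = max (2 * norm z) (8 * c * B + 8 * \<bar>M0 - c * A\<bar> + 1)"
  have big: "M0 < c * (A - B * norm v) + (norm (v - z))\<^sup>2 / 2" if v: "norm v > R0" for v
  proof -
    define n where "n = norm v"
    have n1: "n > 8 * c * B + 8 * \<bar>M0 - c * A\<bar> + 1" and n2: "n \<ge> 2 * norm z"
      using v by (auto simp: n_def R0_def)
    have n0: "n \<ge> 1" using n1 c AB(1) by (smt (verit) mult_nonneg_nonneg abs_ge_zero)
    have "norm (v - z) \<ge> n - norm z" unfolding n_def by (rule norm_triangle_ineq2)
    hence "norm (v - z) \<ge> n / 2" using n2 by simp
    hence "(norm (v - z))\<^sup>2 \<ge> (n / 2)\<^sup>2" using n0 by (intro power_mono) auto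
    hence sq: "(norm (v - z))\<^sup>2 / 2 \<ge> n * n / 8" by (simp add: power2_eq_square)
    have "n * n > n * (8 * c * B + 8 * \<bar>M0 - c * A\<bar> + 1)" using n1 n0 by (intro mult_strict_left_mono) auto
    hence "n * n / 8 > n * (c * B) + n * \<bar>M0 - c * A\<bar> + n / 8" by (simp add: algebra_simps)
    moreover have "n * \<bar>M0 - c * A\<bar> \<ge> \<bar>M0 - c * A\<bar>" using n0 by (simp add: mult_le_cancel_right1)
    moreover have "c * (A - B * n) = c * A - n * (c * B)" by (simp add: algebra_simps)
    ultimately show ?thesis using sq n0 unfolding n_def[symmetric] by linarith
  qed
  obtain p where p: "p \<in> cball 0 R0" "\<forall>v\<in>cball 0 R0. PF c g z p \<le> PF c g z v"
    using lscn_min_compact[OF lF compact_cball, of 0 R0] R0_def by fastforce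
  have x0in: "x0 \<in> cball 0 R0"
  proof (rule ccontr)
    assume "x0 \<notin> cball 0 R0"
    hence "M0 < c * (A - B * norm x0) + (norm (x0 - z))\<^sup>2 / 2" by (intro big) auto
    hence "ereal M0 < ereal (c * (A - B * norm x0) + (norm (x0 - z))\<^sup>2 / 2)" by simp
    hence "ereal M0 < PF c g z x0" using lb[of x0] by (rule less_le_trans)
    then show False using PF0 by simp
  qed
  show ?thesis
  proof (intro exI allI)
    fix v
    show "PF c g z p \<le> PF c g z v"
    proof (cases "v \<in> cball 0 R0")
      case True then show ?thesis using p by blast
    next
      case False
      hence "M0 < c * (A - B * norm v) + (norm (v - z))\<^sup>2 / 2" by (intro big) auto
      hence "ereal M0 \<le> ereal (c * (A - B * norm v) + (norm (v - z))\<^sup>2 / 2)" by simp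
      hence "ereal M0 \<le> PF c g z v" using lb[of v] by (rule order_trans)
      moreover have "PF c g z p \<le> PF c g z x0" using p x0in by blast
      ultimately show ?thesis using PF0 by simp
    qed
  qed
qed

definition VI where
  "VI c g z p \<longleftrightarrow> (\<exists>gp. g p = ereal gp \<and> (\<forall>v gv. g v = ereal gv \<longrightarrow> (z - p) \<bullet> (v - p) \<le> c * (gv - gp)))"

lemma min_imp_vi:
  fixes g :: "'a::real_inner \<Rightarrow> ereal"
  assumes pr: "proper_fun g" and cv: "convex_ereal_fun g" and c: "c > 0"
    and mn: "\<forall>v. PF c g z p \<le> PF c g z v"
  shows "VI c g z p"
proof -
  have nm: "\<And>v. g v \<noteq> -\<infinity>" using pr by (rule proper_nm)
  obtain x0 where "g x0 \<noteq> \<infinity>" using pr unfolding proper_fun_def by blast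
  then obtain a0 where a0: "g x0 = ereal a0" using nm[of x0] by (cases "g x0") auto
  have "g p \<noteq> \<infinity>"
  proof
    assume "g p = \<infinity>"
    hence "PF c g z p = \<infinity>" using c by (simp add: PF_inf)
    moreover have "PF c g z p \<le> PF c g z x0" using mn by blast
    ultimately show False using a0 by (simp add: PF_finite)
  qed
  then obtain gp where gp: "g p = ereal gp" using nm[of p] by (cases "g p") auto
  show ?thesis unfolding VI_def
  proof (intro exI conjI allI impI)
    show "g p = ereal gp" by (rule gp)
    fix v gv assume gv: "g v = ereal gv"
    show "(z - p) \<bullet> (v - p) \<le> c * (gv - gp)"
    proof (rule small_slack)
      show "0 \<le> (norm (v - p))\<^sup>2 / 2" by simp
      fix l :: real assume l: "0 < l" "l < 1"
      define w where "w = (1 - l) *\<^sub>R p + l *\<^sub>R v"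
      obtain gw where gw: "g w = ereal gw" "gw \<le> (1 - l) * gp + l * gv"
        using ereal_conv_finite[OF cv gp gv _ _ nm, of l] l unfolding w_def by auto
      have "PF c g z p \<le> PF c g z w" using mn by blast
      hence h1: "c * gp + (norm (p - z))\<^sup>2 / 2 \<le> c * gw + (norm (w - z))\<^sup>2 / 2"
        using gp gw by (simp add: PF_finite)
      have "w - z = (p - z) + l *\<^sub>R (v - p)" by (simp add: w_def algebra_simps)
      hence h2: "(norm (w - z))\<^sup>2 = (norm (p - z))\<^sup>2 + 2 * l * ((v - p) \<bullet> (p - z)) + l\<^sup>2 * (norm (v - p))\<^sup>2"
        using norm_add_scale_sq by metis
      have h3: "c * gw \<le> c * ((1 - l) * gp + l * gv)" using gw c by (simp add: mult_left_mono)
      have i: "(v - p) \<bullet> (p - z) = - ((z - p) \<bullet> (v - p))"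
        by (simp add: inner_commute inner_diff_right inner_diff_left)
      have e1: "c * ((1 - l) * gp + l * gv) = c * gp - l * (c * gp) + l * (c * gv)" by (simp add: algebra_simps)
      have e2: "l * (c * (gv - gp) + l * ((norm (v - p))\<^sup>2 / 2)) = l * (c * gv) - l * (c * gp) + l\<^sup>2 * (norm (v - p))\<^sup>2 / 2"
        by (simp add: algebra_simps power2_eq_square)
      have e3: "2 * l * ((v - p) \<bullet> (p - z)) = - (2 * (l * ((z - p) \<bullet> (v - p))))" using i by simp
      have "l * ((z - p) \<bullet> (v - p)) \<le> l * (c * (gv - gp) + l * ((norm (v - p))\<^sup>2 / 2))"
        using h1 h2 h3 e1 e2 e3 by linarith
      then show "(z - p) \<bullet> (v - p) \<le> c * (gv - gp) + l * ((norm (v - p))\<^sup>2 / 2)"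
        using l by simp
    qed
  qed
qed

lemma vi_imp_min:
  assumes pr: "proper_fun g" and c: "c > 0" and vi: "VI c g z p"
  shows "\<forall>v. PF c g z p \<le> PF c g z v"
proof
  fix v
  obtain gp where gp: "g p = ereal gp" and h: "\<And>v gv. g v = ereal gv \<Longrightarrow> (z - p) \<bullet> (v - p) \<le> c * (gv - gp)"
    using vi unfolding VI_def by blast
  show "PF c g z p \<le> PF c g z v"
  proof (cases "g v")
    case (real gv)
    have "v - z = (p - z) + 1 *\<^sub>R (v - p)" by simp
    hence e: "(norm (v - z))\<^sup>2 = (norm (p - z))\<^sup>2 + 2 * ((v - p) \<bullet> (p - z)) + (norm (v - p))\<^sup>2"
      using norm_add_scale_sq[of "p - z" 1 "v - p"] by simp
    have i: "(v - p) \<bullet> (p - z) = - ((z - p) \<bullet> (v - p))" by (simp add: inner_commute inner_diff_right inner_diff_left)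
    have "c * (gv - gp) = c * gv - c * gp" by (simp add: algebra_simps)
    hence "c * gp + (norm (p - z))\<^sup>2 / 2 \<le> c * gv + (norm (v - z))\<^sup>2 / 2"
      using h[OF real] e i zero_le_power2[of "norm (v - p)"] by linarith
    then show ?thesis using gp real by (simp add: PF_finite)
  next
    case PInf then show ?thesis using c by (simp add: PF_inf)
  next
    case MInf then show ?thesis using proper_nm[OF pr] by blast
  qed
qed

lemma vi_unique:
  assumes "VI c g z p" "VI c g z q"
  shows "p = q"
proof -
  obtain gp where gp: "g p = ereal gp" and hp: "\<And>v gv. g v = ereal gv \<Longrightarrow> (z - p) \<bullet> (v - p) \<le> c * (gv - gp)"
    using assms(1) unfolding VI_def by blast
  obtain gq where gq: "g q = ereal gq" and hq: "\<And>v gv. g v = ereal gv \<Longrightarrow> (z - q) \<bullet> (v - q) \<le> c * (gv - gq)"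
    using assms(2) unfolding VI_def by blast
  have "(z - p) \<bullet> (q - p) + (z - q) \<bullet> (p - q) \<le> 0" using hp[OF gq] hq[OF gp] by (simp add: algebra_simps)
  moreover have "(z - p) \<bullet> (q - p) + (z - q) \<bullet> (p - q) = (q - p) \<bullet> (q - p)"
    by (simp add: inner_diff_left inner_diff_right inner_commute algebra_simps)
  ultimately have "(q - p) \<bullet> (q - p) \<le> 0" by linarith
  hence "(q - p) \<bullet> (q - p) = 0" by (meson antisym inner_ge_zero)
  then show ?thesis by simp
qed

lemma prox_eq:
  fixes g :: "'a::real_inner \<Rightarrow> ereal"
  assumes pr: "proper_fun g" and cv: "convex_ereal_fun g" and c: "c > 0" and vi: "VI c g z p"
  shows "prox (\<lambda>v. ereal c * g v) z = p"
  unfolding prox_def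
proof (rule the_equality)
  show "\<forall>v. ereal c * g p + ereal ((norm (p - z))\<^sup>2 / 2) \<le> ereal c * g v + ereal ((norm (v - z))\<^sup>2 / 2)"
    using vi_imp_min[OF pr c vi] unfolding PF_def .
  fix u assume "\<forall>v. ereal c * g u + ereal ((norm (u - z))\<^sup>2 / 2) \<le> ereal c * g v + ereal ((norm (v - z))\<^sup>2 / 2)"
  hence "\<forall>v. PF c g z u \<le> PF c g z v" unfolding PF_def .
  hence "VI c g z u" by (rule min_imp_vi[OF pr cv c])
  then show "u = p" using vi vi_unique by blast
qed

lemma prox_vi:
  fixes g :: "'a::euclidean_space \<Rightarrow> ereal"
  assumes pr: "proper_fun g" and ls: "lsc_fun g" and cv: "convex_ereal_fun g" and c: "c > 0"
  shows "VI c g z (prox (\<lambda>v. ereal c * g v) z)"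
proof -
  obtain p where "\<forall>v. PF c g z p \<le> PF c g z v" using min_exists[OF pr ls cv c] by blast
  hence vi: "VI c g z p" by (rule min_imp_vi[OF pr cv c])
  then show ?thesis using prox_eq[OF pr cv c vi] by simp
qed

lemma prox_nonexp:
  fixes g :: "'a::euclidean_space \<Rightarrow> ereal"
  assumes pr: "proper_fun g" and ls: "lsc_fun g" and cv: "convex_ereal_fun g" and c: "c > 0"
  shows "norm (prox (\<lambda>v. ereal c * g v) z1 - prox (\<lambda>v. ereal c * g v) z2) \<le> norm (z1 - z2)"
proof -
  define p1 where "p1 = prox (\<lambda>v. ereal c * g v) z1"
  define p2 where "p2 = prox (\<lambda>v. ereal c * g v) z2"
  obtain g1 where g1: "g p1 = ereal g1" and h1: "\<And>v gv. g v = ereal gv \<Longrightarrow> (z1 - p1) \<bullet> (v - p1) \<le> c * (gv - g1)"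
    using prox_vi[OF pr ls cv c, of z1] unfolding VI_def p1_def by blast
  obtain g2 where g2: "g p2 = ereal g2" and h2: "\<And>v gv. g v = ereal gv \<Longrightarrow> (z2 - p2) \<bullet> (v - p2) \<le> c * (gv - g2)"
    using prox_vi[OF pr ls cv c, of z2] unfolding VI_def p2_def by blast
  have "(z1 - p1) \<bullet> (p2 - p1) + (z2 - p2) \<bullet> (p1 - p2) \<le> 0" using h1[OF g2] h2[OF g1] by (simp add: algebra_simps)
  moreover have "(z1 - p1) \<bullet> (p2 - p1) + (z2 - p2) \<bullet> (p1 - p2) = (p1 - p2) \<bullet> (p1 - p2) - (z1 - z2) \<bullet> (p1 - p2)"
    by (simp add: inner_diff_left inner_diff_right inner_commute algebra_simps)
  ultimately have "(norm (p1 - p2))\<^sup>2 \<le> (z1 - z2) \<bullet> (p1 - p2)" by (simp add: power2_norm_eq_inner)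
  also have "\<dots> \<le> norm (z1 - z2) * norm (p1 - p2)" by (rule norm_cauchy_schwarz)
  finally have "norm (p1 - p2) * norm (p1 - p2) \<le> norm (z1 - z2) * norm (p1 - p2)" by (simp add: power2_eq_square)
  then show ?thesis unfolding p1_def[symmetric] p2_def[symmetric]
    by (cases "norm (p1 - p2) = 0") (auto simp: mult_le_cancel_right)
qed

lemma fb_nonexp:
  fixes f :: "'a::euclidean_space \<Rightarrow> real"
  assumes cv: "convex_on UNIV f"
    and fd: "\<And>y. (f has_derivative (\<lambda>v. df y \<bullet> v)) (at y)"
    and lip: "M-lipschitz_on UNIV df" and M: "M > 0"
    and t: "0 < t" "t \<le> 1 / M"
    and pr: "proper_fun g" and ls: "lsc_fun g" and gc: "convex_ereal_fun g"
  shows "norm (prox (\<lambda>v. ereal t * g v) (x - t *\<^sub>R df x) - prox (\<lambda>v. ereal t * g v) (y - t *\<^sub>R df y)) \<le> norm (x - y)"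
  using prox_nonexp[OF pr ls gc t(1), of "x - t *\<^sub>R df x" "y - t *\<^sub>R df y"]
    grad_step_nonexp[OF cv fd lip M t, of x y] by linarith

lemma fix_iff_argmin:
  fixes f :: "'a::euclidean_space \<Rightarrow> real"
  assumes cv: "convex_on UNIV f"
    and fd: "\<And>y. (f has_derivative (\<lambda>v. df y \<bullet> v)) (at y)"
    and lip: "M-lipschitz_on UNIV df"
    and s: "0 < s"
    and pr: "proper_fun g" and ls: "lsc_fun g" and gc: "convex_ereal_fun g"
  shows "prox (\<lambda>v. ereal s * g v) (x - s *\<^sub>R df x) = x \<longleftrightarrow> x \<in> argmin_on (\<lambda>y. ereal (f y) + g y) UNIV"
proof
  have nm: "\<And>v. g v \<noteq> -\<infinity>" using pr by (rule proper_nm)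
  assume fx: "prox (\<lambda>v. ereal s * g v) (x - s *\<^sub>R df x) = x"
  have "VI s g (x - s *\<^sub>R df x) x" using prox_vi[OF pr ls gc s, of "x - s *\<^sub>R df x"] fx by simp
  then obtain gx where gx: "g x = ereal gx"
    and h: "\<And>v gv. g v = ereal gv \<Longrightarrow> (x - s *\<^sub>R df x - x) \<bullet> (v - x) \<le> s * (gv - gx)"
    unfolding VI_def by blast
  show "x \<in> argmin_on (\<lambda>y. ereal (f y) + g y) UNIV"
    unfolding argmin_on_def
  proof (intro CollectI conjI ballI UNIV_I)
    fix v :: 'a
    show "ereal (f x) + g x \<le> ereal (f v) + g v"
    proof (cases "g v")
      case (real gv)
      have "- s * (df x \<bullet> (v - x)) \<le> s * (gv - gx)" using h[OF real] by simp
      hence "- (df x \<bullet> (v - x)) \<le> gv - gx" using s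
        by (metis mult_le_cancel_left_pos mult_minus_left mult_minus_right)
      moreover have "f v \<ge> f x + df x \<bullet> (v - x)" by (rule tangent_ineq[OF cv fd])
      ultimately show ?thesis using gx real by simp
    next
      case PInf then show ?thesis by simp
    next
      case MInf then show ?thesis using nm by blast
    qed
  qed
next
  have nm: "\<And>v. g v \<noteq> -\<infinity>" using pr by (rule proper_nm)
  assume am: "x \<in> argmin_on (\<lambda>y. ereal (f y) + g y) UNIV"
  hence mn: "\<And>v. ereal (f x) + g x \<le> ereal (f v) + g v" unfolding argmin_on_def by blast
  obtain x0 where "g x0 \<noteq> \<infinity>" using pr unfolding proper_fun_def by blast
  then obtain a0 where a0: "g x0 = ereal a0" using nm[of x0] by (cases "g x0") auto
  have "g x \<noteq> \<infinity>" using mn[of x0] a0 by auto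
  then obtain gx where gx: "g x = ereal gx" using nm[of x] by (cases "g x") auto
  have "VI s g (x - s *\<^sub>R df x) x"
    unfolding VI_def
  proof (intro exI conjI allI impI)
    show "g x = ereal gx" by (rule gx)
    fix v gv assume gv: "g v = ereal gv"
    define d where "d = v - x"
    have "gx - gv \<le> df x \<bullet> d"
    proof (rule small_slack)
      show "0 \<le> M / 2 * (norm d)\<^sup>2" using lip lipschitz_on_nonneg by (metis divide_nonneg_pos zero_less_numeral mult_nonneg_nonneg zero_le_power2)
      fix l :: real assume l: "0 < l" "l < 1"
      define w where "w = (1 - l) *\<^sub>R x + l *\<^sub>R v"
      have wx: "w - x = l *\<^sub>R d" by (simp add: w_def d_def algebra_simps)
      obtain gw where gw: "g w = ereal gw" "gw \<le> (1 - l) * gx + l * gv"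
        using ereal_conv_finite[OF gc gx gv _ _ nm, of l] l unfolding w_def by auto
      have "ereal (f x) + g x \<le> ereal (f w) + g w" by (rule mn)
      hence h1: "f x + gx \<le> f w + gw" using gx gw by simp
      have "f w \<le> f x + df x \<bullet> (w - x) + M / 2 * (norm (w - x))\<^sup>2" by (rule descent_ineq[OF fd lip])
      hence h2: "f w \<le> f x + l * (df x \<bullet> d) + l * (l * (M / 2 * (norm d)\<^sup>2))"
        using l by (simp add: wx power_mult_distrib power2_eq_square algebra_simps)
      have e1: "(1 - l) * gx + l * gv = gx - l * (gx - gv)" by (simp add: algebra_simps)
      have "l * (gx - gv) \<le> l * (df x \<bullet> d + l * (M / 2 * (norm d)\<^sup>2))"
        using h1 h2 gw(2) e1 by (simp add: algebra_simps)
      then show "gx - gv \<le> df x \<bullet> d + l * (M / 2 * (norm d)\<^sup>2)" using l by simp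
    qed
    hence "s * (- (df x \<bullet> d)) \<le> s * (gv - gx)" using s by (intro mult_left_mono) auto
    hence "- s * (df x \<bullet> d) \<le> s * (gv - gx)" by simp
    then show "(x - s *\<^sub>R df x - x) \<bullet> (v - x) \<le> s * (gv - gx)" by (simp add: d_def)
  qed
  then show "prox (\<lambda>v. ereal s * g v) (x - s *\<^sub>R df x) = x" by (rule prox_eq[OF pr gc s])
qed

lemma argmin_convex:
  fixes f :: "'a::euclidean_space \<Rightarrow> real"
  assumes cv: "convex_on UNIV f" and pr: "proper_fun g" and gc: "convex_ereal_fun g"
  shows "convex (argmin_on (\<lambda>y. ereal (f y) + g y) UNIV)"
proof (rule convexI)
  have nm: "\<And>v. g v \<noteq> -\<infinity>" using pr by (rule proper_nm)
  fix x y :: 'a and a b :: real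
  assume x: "x \<in> argmin_on (\<lambda>y. ereal (f y) + g y) UNIV" and y: "y \<in> argmin_on (\<lambda>y. ereal (f y) + g y) UNIV"
    and ab: "0 \<le> a" "0 \<le> b" "a + b = 1"
  have mx: "\<And>v. ereal (f x) + g x \<le> ereal (f v) + g v" using x unfolding argmin_on_def by blast
  have my: "\<And>v. ereal (f y) + g y \<le> ereal (f v) + g v" using y unfolding argmin_on_def by blast
  obtain x0 where "g x0 \<noteq> \<infinity>" using pr unfolding proper_fun_def by blast
  then obtain a0 where a0: "g x0 = ereal a0" using nm[of x0] by (cases "g x0") auto
  have "g x \<noteq> \<infinity>" using mx[of x0] a0 by auto
  then obtain gx where gx: "g x = ereal gx" using nm[of x] by (cases "g x") auto
  have "g y \<noteq> \<infinity>" using my[of x0] a0 by auto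
  then obtain gy where gy: "g y = ereal gy" using nm[of y] by (cases "g y") auto
  have a: "a = 1 - b" using ab by simp
  obtain gw where gw: "g ((1 - b) *\<^sub>R x + b *\<^sub>R y) = ereal gw" "gw \<le> (1 - b) * gx + b * gy"
    using ereal_conv_finite[OF gc gx gy _ _ nm, of b] ab by auto
  have fw: "f ((1 - b) *\<^sub>R x + b *\<^sub>R y) \<le> (1 - b) * f x + b * f y"
    using convex_onD[OF cv, of b x y] ab by auto
  have exy: "f x + gx = f y + gy" using mx[of y] my[of x] gx gy by simp
  have "f ((1 - b) *\<^sub>R x + b *\<^sub>R y) + gw \<le> (1 - b) * (f x + gx) + b * (f y + gy)"
    using fw gw(2) by (simp add: algebra_simps)
  also have "\<dots> = f x + gx" using exy by (simp add: algebra_simps)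
  finally have "ereal (f ((1 - b) *\<^sub>R x + b *\<^sub>R y)) + g ((1 - b) *\<^sub>R x + b *\<^sub>R y) \<le> ereal (f x) + g x"
    using gw gx by simp
  then show "a *\<^sub>R x + b *\<^sub>R y \<in> argmin_on (\<lambda>y. ereal (f y) + g y) UNIV"
    unfolding argmin_on_def a using mx order_trans by blast
qed

lemma unbounded_partial:
  fixes \<gamma> :: "nat \<Rightarrow> real"
  assumes nn: "\<And>k. 0 \<le> \<gamma> k" and ns: "\<not> summable \<gamma>"
  shows "\<exists>m. sum \<gamma> {..<m} > M"
proof (rule ccontr)
  assume "\<not> ?thesis"
  hence "\<forall>m. sum \<gamma> {..<m} \<le> M" by (simp add: not_less)
  hence "summable \<gamma>" using nn by (intro summableI_nonneg_bounded) auto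
  then show False using ns by simp
qed

lemma xu_lemma:
  fixes s \<gamma> \<delta> :: "nat \<Rightarrow> real"
  assumes s0: "\<And>k. s k \<ge> 0" and g: "\<And>k. 0 < \<gamma> k \<and> \<gamma> k \<le> 1" and ns: "\<not> summable \<gamma>"
    and rec: "eventually (\<lambda>k. s (Suc k) \<le> (1 - \<gamma> k) * s k + \<gamma> k * \<delta> k) sequentially"
    and dl: "\<And>\<epsilon>. \<epsilon> > 0 \<Longrightarrow> eventually (\<lambda>k. \<delta> k \<le> \<epsilon>) sequentially"
  shows "s \<longlonglongrightarrow> 0"
proof (rule LIMSEQ_I)
  fix \<epsilon> :: real assume ep: "\<epsilon> > 0"
  define e where "e = \<epsilon> / 2"
  have e0: "e > 0" using ep by (simp add: e_def)
  have "eventually (\<lambda>k. s (Suc k) \<le> (1 - \<gamma> k) * s k + \<gamma> k * \<delta> k \<and> \<delta> k \<le> e) sequentially"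
    using rec dl[OF e0] by (rule eventually_conj)
  then obtain N where N: "\<And>k. k \<ge> N \<Longrightarrow> s (Suc k) \<le> (1 - \<gamma> k) * s k + \<gamma> k * \<delta> k \<and> \<delta> k \<le> e"
    unfolding eventually_sequentially by blast
  define t where "t k = max (s k - e) 0" for k
  have step: "t (Suc k) \<le> (1 - \<gamma> k) * t k" if k: "k \<ge> N" for k
  proof -
    have "s (Suc k) - e \<le> (1 - \<gamma> k) * s k + \<gamma> k * e - e"
      using N[OF k] g[of k] by (smt (verit) mult_left_mono)
    also have "\<dots> = (1 - \<gamma> k) * (s k - e)" by (simp add: algebra_simps)
    also have "\<dots> \<le> (1 - \<gamma> k) * t k" using g[of k] by (intro mult_left_mono) (auto simp: t_def)
    finally show ?thesis using g[of k] by (auto simp: t_def)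
  qed
  have t0: "t k \<ge> 0" for k by (simp add: t_def)
  have bnd: "t (N + m) \<le> t N * exp (- sum (\<lambda>j. \<gamma> (N + j)) {..<m})" for m
  proof (induction m)
    case 0 then show ?case by simp
  next
    case (Suc m)
    have "t (N + Suc m) \<le> (1 - \<gamma> (N + m)) * t (N + m)" using step[of "N + m"] by simp
    also have "\<dots> \<le> exp (- \<gamma> (N + m)) * t (N + m)"
      using exp_ge_add_one_self[of "- \<gamma> (N + m)"] t0 by (intro mult_right_mono) auto
    also have "\<dots> \<le> exp (- \<gamma> (N + m)) * (t N * exp (- sum (\<lambda>j. \<gamma> (N + j)) {..<m}))"
      using Suc.IH by (intro mult_left_mono) auto
    also have "\<dots> = t N * exp (- sum (\<lambda>j. \<gamma> (N + j)) {..<Suc m})"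
      by (simp add: exp_add[symmetric] algebra_simps)
    finally show ?case .
  qed
  have nn: "0 \<le> \<gamma> (N + j)" for j using g[of "N + j"] by simp
  have ns': "\<not> summable (\<lambda>j. \<gamma> (N + j))" using ns by (simp add: add.commute)
  obtain m0 where m0: "sum (\<lambda>j. \<gamma> (N + j)) {..<m0} > t N / e"
    using unbounded_partial[OF nn ns'] by blast
  show "\<exists>n0. \<forall>k\<ge>n0. norm (s k - 0) < \<epsilon>"
  proof (intro exI allI impI)
    fix k assume k: "k \<ge> N + m0"
    define m where "m = k - N"
    have km: "k = N + m" and mm: "m \<ge> m0" using k by (auto simp: m_def)
    have "sum (\<lambda>j. \<gamma> (N + j)) {..<m0} \<le> sum (\<lambda>j. \<gamma> (N + j)) {..<m}"
      using mm nn by (intro sum_mono2) auto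
    hence sm: "sum (\<lambda>j. \<gamma> (N + j)) {..<m} > t N / e" using m0 by simp
    have "t k \<le> t N * exp (- sum (\<lambda>j. \<gamma> (N + j)) {..<m})" using bnd[of m] km by simp
    also have "\<dots> < e"
    proof (cases "t N = 0")
      case True then show ?thesis using e0 by simp
    next
      case False
      hence tp: "t N > 0" using t0[of N] by simp
      have "t N / e < exp (sum (\<lambda>j. \<gamma> (N + j)) {..<m})"
        using sm exp_ge_add_one_self[of "sum (\<lambda>j. \<gamma> (N + j)) {..<m}"] by linarith
      hence "t N < e * exp (sum (\<lambda>j. \<gamma> (N + j)) {..<m})" using e0 by (simp add: field_simps)
      then show ?thesis by (simp add: exp_minus field_simps)
    qed
    finally have "s k - e < e" by (simp add: t_def)
    then show "norm (s k - 0) < \<epsilon>" using s0[of k] by (simp add: e_def)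
  qed
qed

lemma norm3:
  fixes A B C :: "'a::real_normed_vector"
  assumes "0 \<le> a" "0 \<le> b" "0 \<le> c"
  shows "norm (a *\<^sub>R A + b *\<^sub>R B + c *\<^sub>R C) \<le> a * norm A + b * norm B + c * norm C"
proof -
  have "norm (a *\<^sub>R A + b *\<^sub>R B + c *\<^sub>R C) \<le> norm (a *\<^sub>R A) + norm (b *\<^sub>R B) + norm (c *\<^sub>R C)"
    by (meson norm_triangle_le norm_triangle_ineq add_mono order_refl)
  then show ?thesis using assms by simp
qed

lemma iter_conv:
  fixes S T W :: "'a::euclidean_space \<Rightarrow> 'a" and x :: "nat \<Rightarrow> 'a"
  assumes r: "0 \<le> r" "r < 1" and Sc: "\<And>a b. norm (S a - S b) \<le> r * norm (a - b)"
    and Tn: "\<And>a b. norm (T a - T b) \<le> norm (a - b)"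
    and Wn: "\<And>a b. norm (W a - W b) \<le> norm (a - b)"
    and xs: "W xs = xs" and vi: "\<And>y. W y = y \<Longrightarrow> (xs - S xs) \<bullet> (y - xs) \<ge> 0"
    and al: "\<And>k. 0 < \<alpha> k \<and> \<alpha> k < 1" and be: "\<And>k. 0 < \<beta> k \<and> \<beta> k < 1"
    and a0: "\<alpha> \<longlonglongrightarrow> 0" and ns: "\<not> summable \<alpha>"
    and ba: "(\<lambda>k. \<beta> k / \<alpha> k) \<longlonglongrightarrow> 0"
    and dd: "(\<lambda>k. (\<bar>\<beta> (Suc k) - \<beta> k\<bar> + \<bar>\<alpha> (Suc k) - \<alpha> k\<bar>) / \<alpha> (Suc k)) \<longlonglongrightarrow> 0"
    and it: "\<And>k. x (Suc k) = \<alpha> k *\<^sub>R S (x k) + ((1 - \<alpha> k) * \<beta> k) *\<^sub>R T (x k) + ((1 - \<alpha> k) * (1 - \<beta> k)) *\<^sub>R W (x k)"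
  shows "x \<longlonglongrightarrow> xs"
proof -
  have dec: "x (Suc k) - y = \<alpha> k *\<^sub>R (S (x k) - y) + ((1 - \<alpha> k) * \<beta> k) *\<^sub>R (T (x k) - y) + ((1 - \<alpha> k) * (1 - \<beta> k)) *\<^sub>R (W (x k) - y)" for k y
    by (simp add: it algebra_simps)
  have cf: "0 \<le> \<alpha> k" "0 \<le> (1 - \<alpha> k) * \<beta> k" "0 \<le> (1 - \<alpha> k) * (1 - \<beta> k)" for k
    using al[of k] be[of k] by auto
  have r1: "1 - r > 0" using r by simp
  have "eventually (\<lambda>k. \<beta> k / \<alpha> k < 1) sequentially" using ba by (rule order_tendstoD) simp
  then obtain K where K: "\<And>k. k \<ge> K \<Longrightarrow> \<beta> k \<le> \<alpha> k"
    unfolding eventually_sequentially using al by (metis divide_less_eq_1_pos less_imp_le)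
  define c1 where "c1 = norm (S xs - xs) + norm (T xs - xs)"
  define a where "a k = norm (x k - xs)" for k
  have astep: "a (Suc k) \<le> (1 - \<alpha> k * (1 - r)) * a k + \<alpha> k * c1" if k: "k \<ge> K" for k
  proof -
    have "a (Suc k) \<le> \<alpha> k * norm (S (x k) - xs) + ((1 - \<alpha> k) * \<beta> k) * norm (T (x k) - xs) + ((1 - \<alpha> k) * (1 - \<beta> k)) * norm (W (x k) - xs)"
      unfolding a_def dec by (rule norm3[OF cf])
    moreover have "norm (S (x k) - xs) \<le> r * a k + norm (S xs - xs)"
      using Sc[of "x k" xs] norm_triangle_ineq[of "S (x k) - S xs" "S xs - xs"] by (simp add: a_def)
    moreover have "norm (T (x k) - xs) \<le> a k + norm (T xs - xs)"
      using Tn[of "x k" xs] norm_triangle_ineq[of "T (x k) - T xs" "T xs - xs"] by (simp add: a_def)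
    moreover have "norm (W (x k) - xs) \<le> a k"
      using Wn[of "x k" xs] xs by (simp add: a_def)
    ultimately have "a (Suc k) \<le> \<alpha> k * (r * a k + norm (S xs - xs)) + ((1 - \<alpha> k) * \<beta> k) * (a k + norm (T xs - xs)) + ((1 - \<alpha> k) * (1 - \<beta> k)) * a k"
      using cf[of k] by (smt (verit) mult_left_mono)
    also have "\<dots> = (1 - \<alpha> k * (1 - r)) * a k + \<alpha> k * norm (S xs - xs) + ((1 - \<alpha> k) * \<beta> k) * norm (T xs - xs)"
      by (simp add: algebra_simps)
    also have "((1 - \<alpha> k) * \<beta> k) * norm (T xs - xs) \<le> \<alpha> k * norm (T xs - xs)"
    proof -
      have "(1 - \<alpha> k) * \<beta> k \<le> \<alpha> k" using K[OF k] al[of k] be[of k] by (smt (verit) mult_left_le_one_le)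
      then show ?thesis by (simp add: mult_right_mono)
    qed
    finally show ?thesis by (simp add: c1_def algebra_simps)
  qed
  define B0 where "B0 = max (Max (a ` {..K})) (c1 / (1 - r))"
  have aB: "a k \<le> B0" for k
  proof (induction k)
    case 0 then show ?case by (simp add: B0_def le_max_iff_disj)
  next
    case (Suc k)
    show ?case
    proof (cases "Suc k \<le> K")
      case True then show ?thesis by (simp add: B0_def le_max_iff_disj)
    next
      case False
      hence k: "k \<ge> K" by simp
      have "a (Suc k) \<le> (1 - \<alpha> k * (1 - r)) * a k + \<alpha> k * c1" by (rule astep[OF k])
      also have "\<dots> \<le> (1 - \<alpha> k * (1 - r)) * B0 + \<alpha> k * c1"
        using Suc.IH al[of k] r by (intro add_right_mono mult_left_mono) (auto simp: mult_le_one)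
      also have "\<alpha> k * c1 = \<alpha> k * (1 - r) * (c1 / (1 - r))" using r1 by simp
      also have "\<alpha> k * (1 - r) * (c1 / (1 - r)) \<le> \<alpha> k * (1 - r) * B0"
        using al[of k] r1 by (intro mult_left_mono) (auto simp: B0_def)
      finally show ?thesis by (simp add: algebra_simps)
    qed
  qed
  have B00: "B0 \<ge> 0" using aB[of 0] by (simp add: a_def order_trans[OF norm_ge_zero])
  define Cb where "Cb = B0 + norm (S xs - xs) + norm (T xs - xs) + norm xs + 1"
  have bS: "norm (S (x k) - xs) \<le> Cb" for k
  proof -
    have "norm (S (x k) - xs) \<le> r * a k + norm (S xs - xs)"
      using Sc[of "x k" xs] norm_triangle_ineq[of "S (x k) - S xs" "S xs - xs"] by (simp add: a_def)
    moreover have "r * a k \<le> B0" using aB[of k] r by (smt (verit) a_def mult_left_le_one_le norm_ge_zero)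
    ultimately show ?thesis using norm_ge_zero[of "T xs - xs"] norm_ge_zero[of xs] unfolding Cb_def by linarith
  qed
  have bT: "norm (T (x k) - xs) \<le> Cb" for k
  proof -
    have "norm (T (x k) - xs) \<le> a k + norm (T xs - xs)"
      using Tn[of "x k" xs] norm_triangle_ineq[of "T (x k) - T xs" "T xs - xs"] by (simp add: a_def)
    then show ?thesis using aB[of k] norm_ge_zero[of "S xs - xs"] norm_ge_zero[of xs] unfolding Cb_def by linarith
  qed
  have bW: "norm (W (x k) - xs) \<le> Cb" for k
    using Wn[of "x k" xs, unfolded xs] aB[of k] norm_ge_zero[of "S xs - xs"] norm_ge_zero[of xs] norm_ge_zero[of "T xs - xs"]
    unfolding a_def Cb_def by linarith
  have bSW: "norm (S (x k) - W (x k)) \<le> 2 * Cb" for k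
    using norm_triangle_ineq4[of "S (x k) - xs" "W (x k) - xs"] bS[of k] bW[of k] by simp
  have bTW: "norm (T (x k) - W (x k)) \<le> 2 * Cb" for k
    using norm_triangle_ineq4[of "T (x k) - xs" "W (x k) - xs"] bT[of k] bW[of k] by simp
  have Cb0: "Cb \<ge> 0" using B00 by (simp add: Cb_def)
  define d where "d k = norm (x (Suc k) - x k)" for k
  have dstep: "d (Suc k) \<le> (1 - \<alpha> (Suc k) * (1 - r)) * d k + 4 * Cb * (\<bar>\<beta> (Suc k) - \<beta> k\<bar> + \<bar>\<alpha> (Suc k) - \<alpha> k\<bar>)" for k
  proof -
    define A' where "A' = \<alpha> (Suc k)" define B' where "B' = \<beta> (Suc k)"
    define A where "A = \<alpha> k" define B where "B = \<beta> k"
    define u where "u = x (Suc k)" define v where "v = x k"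
    have "x (Suc (Suc k)) - x (Suc k) = (A' *\<^sub>R (S u - S v) + ((1 - A') * B') *\<^sub>R (T u - T v) + ((1 - A') * (1 - B')) *\<^sub>R (W u - W v))
        + ((A' - A) *\<^sub>R (S v - W v) + ((1 - A') * B' - (1 - A) * B) *\<^sub>R (T v - W v))"
      unfolding it[of "Suc k"] u_def[symmetric] A'_def[symmetric] B'_def[symmetric]
      by (simp add: u_def v_def it A_def B_def algebra_simps)
    hence "d (Suc k) \<le> norm (A' *\<^sub>R (S u - S v) + ((1 - A') * B') *\<^sub>R (T u - T v) + ((1 - A') * (1 - B')) *\<^sub>R (W u - W v))
        + norm ((A' - A) *\<^sub>R (S v - W v) + ((1 - A') * B' - (1 - A) * B) *\<^sub>R (T v - W v))"
      by (simp add: d_def norm_triangle_ineq)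
    moreover have "norm (A' *\<^sub>R (S u - S v) + ((1 - A') * B') *\<^sub>R (T u - T v) + ((1 - A') * (1 - B')) *\<^sub>R (W u - W v))
        \<le> (1 - A' * (1 - r)) * d k"
    proof -
      have "norm (A' *\<^sub>R (S u - S v) + ((1 - A') * B') *\<^sub>R (T u - T v) + ((1 - A') * (1 - B')) *\<^sub>R (W u - W v))
          \<le> A' * norm (S u - S v) + ((1 - A') * B') * norm (T u - T v) + ((1 - A') * (1 - B')) * norm (W u - W v)"
        unfolding A'_def B'_def by (rule norm3[OF cf])
      also have "\<dots> \<le> A' * (r * d k) + ((1 - A') * B') * d k + ((1 - A') * (1 - B')) * d k"
        using Sc[of u v] Tn[of u v] Wn[of u v] cf[of "Suc k"] unfolding d_def u_def v_def A'_def B'_def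
        by (intro add_mono mult_left_mono) auto
      also have "\<dots> = (1 - A' * (1 - r)) * d k" by (simp add: algebra_simps)
      finally show ?thesis .
    qed
    moreover have "norm ((A' - A) *\<^sub>R (S v - W v) + ((1 - A') * B' - (1 - A) * B) *\<^sub>R (T v - W v))
        \<le> 4 * Cb * (\<bar>\<beta> (Suc k) - \<beta> k\<bar> + \<bar>\<alpha> (Suc k) - \<alpha> k\<bar>)"
    proof -
      have c2: "\<bar>(1 - A') * B' - (1 - A) * B\<bar> \<le> \<bar>B' - B\<bar> + \<bar>A' - A\<bar>"
      proof -
        have "(1 - A') * B' - (1 - A) * B = (1 - A') * (B' - B) - (A' - A) * B" by (simp add: algebra_simps)
        hence "\<bar>(1 - A') * B' - (1 - A) * B\<bar> \<le> \<bar>1 - A'\<bar> * \<bar>B' - B\<bar> + \<bar>A' - A\<bar> * \<bar>B\<bar>"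
          by (metis abs_diff_le_iff abs_mult abs_triangle_ineq4)
        moreover have "\<bar>1 - A'\<bar> * \<bar>B' - B\<bar> \<le> \<bar>B' - B\<bar>" using al[of "Suc k"] unfolding A'_def
          by (intro mult_left_le_one_le) auto
        moreover have "\<bar>A' - A\<bar> * \<bar>B\<bar> \<le> \<bar>A' - A\<bar>" using be[of k] unfolding B_def
          by (intro mult_right_le_one_le) auto
        ultimately show ?thesis by linarith
      qed
      have "norm ((A' - A) *\<^sub>R (S v - W v) + ((1 - A') * B' - (1 - A) * B) *\<^sub>R (T v - W v))
          \<le> \<bar>A' - A\<bar> * norm (S v - W v) + \<bar>(1 - A') * B' - (1 - A) * B\<bar> * norm (T v - W v)"
        by (metis norm_scaleR norm_triangle_le order_refl add_mono)
      also have "\<dots> \<le> \<bar>A' - A\<bar> * (2 * Cb) + (\<bar>B' - B\<bar> + \<bar>A' - A\<bar>) * (2 * Cb)"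
        using bSW[of k] bTW[of k] c2 Cb0 unfolding v_def
        by (intro add_mono mult_mono) auto
      also have "\<dots> \<le> 4 * Cb * (\<bar>B' - B\<bar> + \<bar>A' - A\<bar>)"
        using Cb0 by (simp add: algebra_simps)
      finally show ?thesis by (simp add: A'_def A_def B'_def B_def)
    qed
    ultimately show ?thesis by (simp add: A'_def)
  qed
  have d0: "d \<longlonglongrightarrow> 0"
  proof -
    define \<gamma> where "\<gamma> k = \<alpha> (Suc k) * (1 - r)" for k
    define \<delta> where "\<delta> k = 4 * Cb * ((\<bar>\<beta> (Suc k) - \<beta> k\<bar> + \<bar>\<alpha> (Suc k) - \<alpha> k\<bar>) / \<alpha> (Suc k)) / (1 - r)" for k
    show ?thesis
    proof (rule xu_lemma)
      show "0 \<le> d k" for k by (simp add: d_def)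
      show "0 < \<gamma> k \<and> \<gamma> k \<le> 1" for k using al[of "Suc k"] r unfolding \<gamma>_def
        by (auto intro: mult_le_one)
      show "\<not> summable \<gamma>" using ns r1 unfolding \<gamma>_def
        by (simp add: summable_Suc_iff mult.commute[of _ "1 - r"])
      show "eventually (\<lambda>k. d (Suc k) \<le> (1 - \<gamma> k) * d k + \<gamma> k * \<delta> k) sequentially"
      proof (rule always_eventually, rule allI)
        fix k
        have "\<gamma> k * \<delta> k = 4 * Cb * (\<bar>\<beta> (Suc k) - \<beta> k\<bar> + \<bar>\<alpha> (Suc k) - \<alpha> k\<bar>)"
          using al[of "Suc k"] r1 unfolding \<gamma>_def \<delta>_def by (simp add: field_simps)
        then show "d (Suc k) \<le> (1 - \<gamma> k) * d k + \<gamma> k * \<delta> k"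
          using dstep[of k] by (simp add: \<gamma>_def)
      qed
      fix \<epsilon> :: real assume ep: "\<epsilon> > 0"
      have "\<delta> \<longlonglongrightarrow> 4 * Cb * 0 / (1 - r)"
        unfolding \<delta>_def by (intro tendsto_intros dd) (use r1 in simp)
      hence "\<delta> \<longlonglongrightarrow> 0" by simp
      hence "eventually (\<lambda>k. \<delta> k < \<epsilon>) sequentially" using ep by (rule order_tendstoD)
      then show "eventually (\<lambda>k. \<delta> k \<le> \<epsilon>) sequentially" by (rule eventually_mono) simp
    qed
  qed
  have b0: "\<beta> \<longlonglongrightarrow> 0"
  proof -
    have "(\<lambda>k. \<beta> k / \<alpha> k * \<alpha> k) \<longlonglongrightarrow> 0 * 0" by (rule tendsto_mult[OF ba a0])
    moreover have "\<beta> k / \<alpha> k * \<alpha> k = \<beta> k" for k using al[of k] by simp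
    ultimately show ?thesis by simp
  qed
  have e0: "(\<lambda>k. x k - W (x k)) \<longlonglongrightarrow> 0"
  proof (rule Lim_null_comparison)
    show "eventually (\<lambda>k. norm (x k - W (x k)) \<le> d k + 2 * Cb * (\<alpha> k + \<beta> k)) sequentially"
    proof (rule always_eventually, rule allI)
      fix k
      have "x (Suc k) - W (x k) = \<alpha> k *\<^sub>R (S (x k) - W (x k)) + ((1 - \<alpha> k) * \<beta> k) *\<^sub>R (T (x k) - W (x k))"
        by (simp add: it algebra_simps)
      hence "norm (x (Suc k) - W (x k)) \<le> \<alpha> k * norm (S (x k) - W (x k)) + ((1 - \<alpha> k) * \<beta> k) * norm (T (x k) - W (x k))"
        using cf[of k] by (metis abs_of_nonneg norm_scaleR norm_triangle_le order_refl add_mono)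
      also have "\<dots> \<le> \<alpha> k * (2 * Cb) + \<beta> k * (2 * Cb)"
      proof (intro add_mono mult_mono)
        show "(1 - \<alpha> k) * \<beta> k \<le> \<beta> k" using al[of k] be[of k] by (simp add: mult_left_le_one_le)
      qed (use bSW bTW al[of k] be[of k] Cb0 in auto)
      finally have h: "norm (x (Suc k) - W (x k)) \<le> 2 * Cb * (\<alpha> k + \<beta> k)" by (simp add: algebra_simps)
      have "x k - W (x k) = (x (Suc k) - W (x k)) - (x (Suc k) - x k)" by simp
      hence "norm (x k - W (x k)) \<le> norm (x (Suc k) - W (x k)) + norm (x (Suc k) - x k)"
        by (metis norm_triangle_ineq4)
      then show "norm (x k - W (x k)) \<le> d k + 2 * Cb * (\<alpha> k + \<beta> k)" using h by (simp add: d_def)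
    qed
    have "(\<lambda>k. d k + 2 * Cb * (\<alpha> k + \<beta> k)) \<longlonglongrightarrow> 0 + 2 * Cb * (0 + 0)"
      by (intro tendsto_intros d0 a0 b0)
    then show "(\<lambda>k. d k + 2 * Cb * (\<alpha> k + \<beta> k)) \<longlonglongrightarrow> 0" by simp
  qed
  have Wc: "continuous_on UNIV W"
    by (rule lipschitz_on_continuous_on[of 1]) (rule lipschitz_onI, use Wn in \<open>auto simp: dist_norm\<close>)
  have ip: "eventually (\<lambda>k. (S xs - xs) \<bullet> (x k - xs) \<le> \<epsilon>) sequentially" if ep: "\<epsilon> > 0" for \<epsilon>
  proof (rule ccontr)
    assume "\<not> eventually (\<lambda>k. (S xs - xs) \<bullet> (x k - xs) \<le> \<epsilon>) sequentially"
    hence "infinite {k. \<not> (S xs - xs) \<bullet> (x k - xs) \<le> \<epsilon>}"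
      unfolding cofinite_eq_sequentially[symmetric] eventually_cofinite by simp
    from infinite_enumerate[OF this] obtain \<sigma> :: "nat \<Rightarrow> nat"
      where \<sigma>0: "strict_mono \<sigma>" "\<forall>n. \<sigma> n \<in> {k. \<not> (S xs - xs) \<bullet> (x k - xs) \<le> \<epsilon>}" by blast
    have \<sigma>: "strict_mono \<sigma>" "\<And>n. (S xs - xs) \<bullet> (x (\<sigma> n) - xs) > \<epsilon>"
      using \<sigma>0 by (auto simp: not_le)
    have "bounded (range (x \<circ> \<sigma>))"
      unfolding bounded_iff
    proof (intro exI ballI)
      fix y assume "y \<in> range (x \<circ> \<sigma>)"
      then obtain n where y: "y = x (\<sigma> n)" by auto
      have "norm y \<le> norm (x (\<sigma> n) - xs) + norm xs" using y norm_triangle_sub[of y xs] by simp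
      then show "norm y \<le> B0 + norm xs" using aB[of "\<sigma> n"] by (simp add: a_def)
    qed
    from bounded_imp_convergent_subsequence[OF this] obtain l \<rho>
      where \<rho>: "strict_mono \<rho>" "((x \<circ> \<sigma>) \<circ> \<rho>) \<longlonglongrightarrow> l" by blast
    define \<tau> where "\<tau> = \<sigma> \<circ> \<rho>"
    have \<tau>: "strict_mono \<tau>" unfolding \<tau>_def using \<sigma>(1) \<rho>(1) by (rule strict_mono_o)
    have xl: "(\<lambda>n. x (\<tau> n)) \<longlonglongrightarrow> l" using \<rho>(2) by (simp add: \<tau>_def o_def)
    have "(\<lambda>n. W (x (\<tau> n))) \<longlonglongrightarrow> W l"
    proof (rule isCont_tendsto_compose[OF _ xl])
      show "isCont W l" using Wc by (simp add: continuous_on_eq_continuous_at)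
    qed
    hence "(\<lambda>n. x (\<tau> n) - W (x (\<tau> n))) \<longlonglongrightarrow> l - W l" using xl by (intro tendsto_intros)
    moreover have "(\<lambda>n. x (\<tau> n) - W (x (\<tau> n))) \<longlonglongrightarrow> 0"
      using LIMSEQ_subseq_LIMSEQ[OF e0 \<tau>] by (simp add: o_def)
    ultimately have "l - W l = 0" by (rule LIMSEQ_unique)
    hence Wl: "W l = l" by simp
    have "(\<lambda>n. (S xs - xs) \<bullet> (x (\<tau> n) - xs)) \<longlonglongrightarrow> (S xs - xs) \<bullet> (l - xs)"
      by (intro tendsto_intros xl)
    moreover have "\<forall>n. \<epsilon> \<le> (S xs - xs) \<bullet> (x (\<tau> n) - xs)" using \<sigma>(2) by (simp add: \<tau>_def less_imp_le)
    ultimately have "\<epsilon> \<le> (S xs - xs) \<bullet> (l - xs)" by (intro LIMSEQ_le_const) auto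
    moreover have "(xs - S xs) \<bullet> (l - xs) \<ge> 0" by (rule vi[OF Wl])
    moreover have "(S xs - xs) \<bullet> (l - xs) = - ((xs - S xs) \<bullet> (l - xs))" by (simp add: inner_diff_left)
    ultimately show False using ep by linarith
  qed
  define c where "c = norm (T xs - xs)"
  define K1 where "K1 = 2 * c * B0 + c\<^sup>2"
  define sq where "sq k = (a k)\<^sup>2" for k
  have sstep: "sq (Suc k) \<le> (1 - \<alpha> k * (1 - r)) * sq k + \<beta> k * K1 + 2 * \<alpha> k * ((S xs - xs) \<bullet> (x (Suc k) - xs))" for k
  proof -
    define P where "P = \<alpha> k *\<^sub>R (S (x k) - S xs) + ((1 - \<alpha> k) * \<beta> k) *\<^sub>R (T (x k) - xs) + ((1 - \<alpha> k) * (1 - \<beta> k)) *\<^sub>R (W (x k) - xs)"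
    define Q where "Q = \<alpha> k *\<^sub>R (S xs - xs)"
    have PQ: "x (Suc k) - xs = P + Q" unfolding P_def Q_def dec by (simp add: algebra_simps)
    define g where "g = \<alpha> k * (1 - r)"
    have g01: "0 \<le> g" "g \<le> 1" using al[of k] r unfolding g_def by (auto intro: mult_le_one)
    have nP: "norm P \<le> (1 - g) * a k + \<beta> k * c"
    proof -
      have "norm P \<le> \<alpha> k * norm (S (x k) - S xs) + ((1 - \<alpha> k) * \<beta> k) * norm (T (x k) - xs) + ((1 - \<alpha> k) * (1 - \<beta> k)) * norm (W (x k) - xs)"
        unfolding P_def by (rule norm3[OF cf])
      also have "\<dots> \<le> \<alpha> k * (r * a k) + ((1 - \<alpha> k) * \<beta> k) * (a k + c) + ((1 - \<alpha> k) * (1 - \<beta> k)) * a k"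
      proof (intro add_mono mult_left_mono)
        show "norm (S (x k) - S xs) \<le> r * a k" using Sc by (simp add: a_def)
        show "norm (T (x k) - xs) \<le> a k + c"
          using Tn[of "x k" xs] norm_triangle_ineq[of "T (x k) - T xs" "T xs - xs"] by (simp add: a_def c_def)
        show "norm (W (x k) - xs) \<le> a k" using Wn[of "x k" xs] xs by (simp add: a_def)
      qed (use cf in auto)
      also have "\<dots> = (1 - g) * a k + ((1 - \<alpha> k) * \<beta> k) * c" by (simp add: g_def algebra_simps)
      also have "((1 - \<alpha> k) * \<beta> k) * c \<le> \<beta> k * c"
        using al[of k] be[of k] by (intro mult_right_mono) (auto simp: c_def mult_left_le_one_le)
      finally show ?thesis by simp
    qed
    have ak: "0 \<le> a k" "a k \<le> B0" using aB[of k] by (auto simp: a_def)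
    have c0: "c \<ge> 0" by (simp add: c_def)
    have "(norm P)\<^sup>2 \<le> ((1 - g) * a k + \<beta> k * c)\<^sup>2" using nP by (intro power_mono) auto
    also have "\<dots> = (1 - g)\<^sup>2 * (a k)\<^sup>2 + \<beta> k * (2 * ((1 - g) * a k) * c) + (\<beta> k)\<^sup>2 * c\<^sup>2"
      by (simp add: power2_eq_square algebra_simps)
    also have "\<dots> \<le> (1 - g) * (a k)\<^sup>2 + \<beta> k * (2 * B0 * c) + \<beta> k * c\<^sup>2"
    proof (intro add_mono)
      show "(1 - g)\<^sup>2 * (a k)\<^sup>2 \<le> (1 - g) * (a k)\<^sup>2"
        using g01 by (intro mult_right_mono) (auto simp: power2_eq_square mult_left_le_one_le)
      have "(1 - g) * a k \<le> B0" using g01 ak by (smt (verit) mult_left_le_one_le)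
      then show "\<beta> k * (2 * ((1 - g) * a k) * c) \<le> \<beta> k * (2 * B0 * c)"
        using be[of k] c0 by (intro mult_left_mono mult_right_mono) auto
      show "(\<beta> k)\<^sup>2 * c\<^sup>2 \<le> \<beta> k * c\<^sup>2"
        using be[of k] by (intro mult_right_mono) (auto simp: power2_eq_square mult_left_le_one_le)
    qed
    finally have nP2: "(norm P)\<^sup>2 \<le> (1 - g) * sq k + \<beta> k * K1"
      by (simp add: sq_def K1_def algebra_simps)
    have "(norm (P + Q))\<^sup>2 = (norm P)\<^sup>2 + 2 * (P \<bullet> Q) + (norm Q)\<^sup>2"
      by (simp add: power2_norm_eq_inner inner_add_left inner_add_right inner_commute)
    also have "\<dots> \<le> (norm P)\<^sup>2 + 2 * (Q \<bullet> (P + Q))"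
      by (simp add: power2_norm_eq_inner inner_add_right inner_commute)
    finally have "(norm (P + Q))\<^sup>2 \<le> (norm P)\<^sup>2 + 2 * (Q \<bullet> (P + Q))" .
    moreover have "Q \<bullet> (P + Q) = \<alpha> k * ((S xs - xs) \<bullet> (x (Suc k) - xs))" by (simp only: PQ[symmetric]) (simp add: Q_def)
    ultimately show ?thesis using nP2 PQ by (simp add: sq_def a_def g_def)
  qed
  have sq0: "sq \<longlonglongrightarrow> 0"
  proof (rule xu_lemma)
    define \<delta> where "\<delta> k = (\<beta> k / \<alpha> k * K1 + 2 * ((S xs - xs) \<bullet> (x (Suc k) - xs))) / (1 - r)" for k
    show "0 \<le> sq k" for k by (simp add: sq_def)
    show "0 < \<alpha> k * (1 - r) \<and> \<alpha> k * (1 - r) \<le> 1" for k using al[of k] r by (auto intro: mult_le_one)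
    show "\<not> summable (\<lambda>k. \<alpha> k * (1 - r))" using ns r1 by (simp add: mult.commute[of _ "1 - r"])
    show "eventually (\<lambda>k. sq (Suc k) \<le> (1 - \<alpha> k * (1 - r)) * sq k + \<alpha> k * (1 - r) * \<delta> k) sequentially"
    proof (rule always_eventually, rule allI)
      fix k
      have "\<alpha> k * (1 - r) * \<delta> k = \<beta> k * K1 + 2 * \<alpha> k * ((S xs - xs) \<bullet> (x (Suc k) - xs))"
        using al[of k] r1 unfolding \<delta>_def by (simp add: field_simps)
      then show "sq (Suc k) \<le> (1 - \<alpha> k * (1 - r)) * sq k + \<alpha> k * (1 - r) * \<delta> k" using sstep[of k] by simp
    qed
    fix \<epsilon> :: real assume ep: "\<epsilon> > 0"
    have "(\<lambda>k. \<beta> k / \<alpha> k * K1) \<longlonglongrightarrow> 0 * K1" by (intro tendsto_intros ba)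
    hence "eventually (\<lambda>k. \<beta> k / \<alpha> k * K1 < \<epsilon> * (1 - r) / 2) sequentially"
      using ep r1 by (intro order_tendstoD) auto
    moreover have "eventually (\<lambda>k. (S xs - xs) \<bullet> (x (Suc k) - xs) \<le> \<epsilon> * (1 - r) / 4) sequentially"
    proof (rule eventually_sequentially_Suc[THEN iffD2])
      show "eventually (\<lambda>k. (S xs - xs) \<bullet> (x k - xs) \<le> \<epsilon> * (1 - r) / 4) sequentially"
        using ep r1 by (intro ip) simp
    qed
    ultimately show "eventually (\<lambda>k. \<delta> k \<le> \<epsilon>) sequentially"
    proof (rule eventually_elim2)
      fix k assume h1: "\<beta> k / \<alpha> k * K1 < \<epsilon> * (1 - r) / 2"
        and h2: "(S xs - xs) \<bullet> (x (Suc k) - xs) \<le> \<epsilon> * (1 - r) / 4"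
      have "\<beta> k / \<alpha> k * K1 + 2 * ((S xs - xs) \<bullet> (x (Suc k) - xs)) \<le> \<epsilon> * (1 - r)" using h1 h2 by linarith
      then show "\<delta> k \<le> \<epsilon>" using r1 unfolding \<delta>_def by (simp add: divide_le_eq)
    qed
  qed
  have "(\<lambda>k. sqrt (sq k)) \<longlonglongrightarrow> sqrt 0" by (intro tendsto_intros sq0)
  moreover have "sqrt (sq k) = norm (x k - xs)" for k by (simp add: sq_def a_def)
  ultimately have "(\<lambda>k. norm (x k - xs)) \<longlonglongrightarrow> 0" by simp
  then show ?thesis by (simp add: tendsto_norm_zero_iff LIM_zero_iff)
qed

theorem mainTheorem4:
  fixes f1 f2 \<omega> :: "'a::euclidean_space \<Rightarrow> real"
    and df1 df2 d\<omega> :: "'a \<Rightarrow> 'a"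
    and g1 g2 :: "'a \<Rightarrow> ereal"
    and Lf1 Lf2 L\<omega> \<mu> u t s :: real
    and \<alpha> \<beta> :: "nat \<Rightarrow> real"
    and x0 :: 'a
    and x :: "nat \<Rightarrow> 'a"
  assumes f1_convex: "convex_on UNIV f1" and f2_convex: "convex_on UNIV f2"
    and f1_grad: "\<And>y. (f1 has_derivative (\<lambda>h. df1 y \<bullet> h)) (at y)"
    and f2_grad: "\<And>y. (f2 has_derivative (\<lambda>h. df2 y \<bullet> h)) (at y)"
    and f1_cont: "continuous_on UNIV df1" and f2_cont: "continuous_on UNIV df2"
    and Lf1_pos: "Lf1 > 0" and Lf2_pos: "Lf2 > 0"
    and f1_lip: "Lf1-lipschitz_on UNIV df1" and f2_lip: "Lf2-lipschitz_on UNIV df2"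
    and g1_proper: "proper_fun g1" and g1_lsc: "lsc_fun g1" and g1_convex: "convex_ereal_fun g1"
    and g2_proper: "proper_fun g2" and g2_lsc: "lsc_fun g2" and g2_convex: "convex_ereal_fun g2"
    and mu_pos: "\<mu> > 0" and \<omega>_sc: "strongly_convex \<mu> \<omega>"
    and \<omega>_grad: "\<And>y. (\<omega> has_derivative (\<lambda>h. d\<omega> y \<bullet> h)) (at y)"
    and \<omega>_cont: "continuous_on UNIV d\<omega>"
    and L\<omega>_pos: "L\<omega> > 0" and \<omega>_lip: "L\<omega>-lipschitz_on UNIV d\<omega>"
    and Ystar_ne: "argmin_on (\<lambda>y. ereal (f2 y) + g2 y) UNIV \<noteq> {}"
    and Xstar_ne: "argmin_on (\<lambda>y. ereal (f1 y) + g1 y) (argmin_on (\<lambda>y. ereal (f2 y) + g2 y) UNIV) \<noteq> {}"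
    and u_range: "0 < u" "u \<le> 2 / (L\<omega> + \<mu>)"
    and t_range: "0 < t" "t \<le> 1 / Lf1"
    and s_range: "0 < s" "s \<le> 1 / Lf2"
    and \<alpha>_range: "\<And>k. 0 < \<alpha> k \<and> \<alpha> k < 1"
    and \<beta>_range: "\<And>k. 0 < \<beta> k \<and> \<beta> k < 1"
    and x_init: "x 0 = x0"
    and x_iter: "\<And>k. x (Suc k) =
        \<alpha> k *\<^sub>R (x k - u *\<^sub>R d\<omega> (x k))
      + ((1 - \<alpha> k) * \<beta> k) *\<^sub>R prox (\<lambda>v. ereal t * g1 v) (x k - t *\<^sub>R df1 (x k))
      + ((1 - \<alpha> k) * (1 - \<beta> k)) *\<^sub>R prox (\<lambda>v. ereal s * g2 v) (x k - s *\<^sub>R df2 (x k))"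
    and h1: "limsup (\<lambda>k. ereal (\<beta> k / \<alpha> k)) = 0"
    and h2: "\<alpha> \<longlonglongrightarrow> 0"
    and h3: "\<not> summable \<alpha>"
    and h4: "limsup (\<lambda>k. ereal ((\<bar>\<beta> k - \<beta> (k - 1)\<bar> + \<bar>\<alpha> k - \<alpha> (k - 1)\<bar>) / (\<alpha> k * \<beta> k))) = 0"
  shows "\<exists>xs. let S = (\<lambda>y. y - u *\<^sub>R d\<omega> y);
                 W = (\<lambda>y. prox (\<lambda>v. ereal s * g2 v) (y - s *\<^sub>R df2 y));
                 P = (\<lambda>z. W z = z \<and> (\<forall>y. W y = y \<longrightarrow> (z - S z) \<bullet> (y - z) \<ge> 0))
             in P xs \<and> (\<forall>z. P z \<longrightarrow> z = xs)
                \<and> xs \<in> argmin_on (\<lambda>y. ereal (\<omega> y)) (argmin_on (\<lambda>y. ereal (f2 y) + g2 y) UNIV)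
                \<and> x \<longlonglongrightarrow> xs"
proof -
  define S where "S = (\<lambda>y::'a. y - u *\<^sub>R d\<omega> y)"
  define T where "T = (\<lambda>y. prox (\<lambda>v. ereal t * g1 v) (y - t *\<^sub>R df1 y))"
  define W where "W = (\<lambda>y. prox (\<lambda>v. ereal s * g2 v) (y - s *\<^sub>R df2 y))"
  define Y where "Y = argmin_on (\<lambda>y. ereal (f2 y) + g2 y) UNIV"
  obtain r where r: "0 \<le> r" "r < 1" and Sc0: "\<And>a b. norm ((a - u *\<^sub>R d\<omega> a) - (b - u *\<^sub>R d\<omega> b)) \<le> r * norm (a - b)"
    using contraction_S[OF \<omega>_sc \<omega>_grad \<omega>_lip mu_pos L\<omega>_pos u_range] by blast
  have Sc: "\<And>a b. norm (S a - S b) \<le> r * norm (a - b)" using Sc0 by (simp add: S_def)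
  have Tn: "\<And>a b. norm (T a - T b) \<le> norm (a - b)"
    unfolding T_def by (rule fb_nonexp[OF f1_convex f1_grad f1_lip Lf1_pos t_range g1_proper g1_lsc g1_convex])
  have Wn: "\<And>a b. norm (W a - W b) \<le> norm (a - b)"
    unfolding W_def by (rule fb_nonexp[OF f2_convex f2_grad f2_lip Lf2_pos s_range g2_proper g2_lsc g2_convex])
  have fixY: "W y = y \<longleftrightarrow> y \<in> Y" for y
    unfolding W_def Y_def by (rule fix_iff_argmin[OF f2_convex f2_grad f2_lip s_range(1) g2_proper g2_lsc g2_convex])
  have Wc: "continuous_on UNIV W"
    by (rule lipschitz_on_continuous_on[of 1]) (rule lipschitz_onI, use Wn in \<open>auto simp: dist_norm\<close>)
  have Yeq: "Y = {y. W y = y}" using fixY by auto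
  have Ycl: "closed Y" unfolding Yeq by (intro closed_Collect_eq Wc continuous_on_id)
  have Ycv: "convex Y" unfolding Y_def by (rule argmin_convex[OF f2_convex g2_proper g2_convex])
  have Yne: "Y \<noteq> {}" using Ystar_ne by (simp add: Y_def)
  have "\<exists>!z. closest_point Y (S z) = z"
  proof (rule banach_fix_type[OF r])
    show "\<forall>a b. dist (closest_point Y (S a)) (closest_point Y (S b)) \<le> r * dist a b"
    proof (intro allI)
      fix a b
      have "dist (closest_point Y (S a)) (closest_point Y (S b)) \<le> dist (S a) (S b)"
        by (rule closest_point_lipschitz[OF Ycv Ycl Yne])
      also have "\<dots> \<le> r * dist a b" using Sc by (simp add: dist_norm)
      finally show "dist (closest_point Y (S a)) (closest_point Y (S b)) \<le> r * dist a b" .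
    qed
  qed
  then obtain xs where xs: "closest_point Y (S xs) = xs" by blast
  have xsY: "xs \<in> Y" using closest_point_in_set[OF Ycl Yne, of "S xs"] xs by simp
  have Wxs: "W xs = xs" using fixY xsY by simp
  have vi: "(xs - S xs) \<bullet> (y - xs) \<ge> 0" if "W y = y" for y
  proof -
    have "y \<in> Y" using that fixY by simp
    hence "(S xs - xs) \<bullet> (y - xs) \<le> 0" using closest_point_dot[OF Ycv Ycl, of y "S xs"] xs by simp
    moreover have "(xs - S xs) \<bullet> (y - xs) = - ((S xs - xs) \<bullet> (y - xs))" by (simp add: inner_diff_left)
    ultimately show ?thesis by simp
  qed
  have uniq: "z = xs" if Wz: "W z = z" and viz: "\<forall>y. W y = y \<longrightarrow> (z - S z) \<bullet> (y - z) \<ge> 0" for z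
  proof -
    have h1: "(z - S z) \<bullet> (xs - z) \<ge> 0" using viz Wxs by blast
    have h2: "(xs - S xs) \<bullet> (z - xs) \<ge> 0" using vi Wz by blast
    have "(z - S z) \<bullet> (xs - z) + (xs - S xs) \<bullet> (z - xs) = (S z - S xs) \<bullet> (z - xs) - (z - xs) \<bullet> (z - xs)"
      by (simp add: inner_diff_left inner_diff_right inner_commute algebra_simps)
    hence "(z - xs) \<bullet> (z - xs) \<le> (S z - S xs) \<bullet> (z - xs)" using h1 h2 by linarith
    also have "\<dots> \<le> norm (S z - S xs) * norm (z - xs)" by (rule norm_cauchy_schwarz)
    also have "\<dots> \<le> r * norm (z - xs) * norm (z - xs)" using Sc[of z xs] by (simp add: mult_right_mono)
    finally have "(1 - r) * (norm (z - xs) * norm (z - xs)) \<le> 0"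
      by (simp add: power2_norm_eq_inner[symmetric] power2_eq_square algebra_simps)
    moreover have "1 - r > 0" using r by simp
    ultimately have "norm (z - xs) * norm (z - xs) \<le> 0" by (simp add: mult_le_0_iff)
    hence "norm (z - xs) = 0" by (metis mult_eq_0_iff mult_le_0_iff norm_ge_zero antisym)
    then show ?thesis by simp
  qed
  have amin: "xs \<in> argmin_on (\<lambda>y. ereal (\<omega> y)) Y"
    unfolding argmin_on_def
  proof (intro CollectI conjI ballI)
    show "xs \<in> Y" by (rule xsY)
    fix y assume "y \<in> Y"
    hence "(xs - S xs) \<bullet> (y - xs) \<ge> 0" using vi fixY by blast
    hence "u * (d\<omega> xs \<bullet> (y - xs)) \<ge> 0" by (simp add: S_def)
    hence "d\<omega> xs \<bullet> (y - xs) \<ge> 0" using u_range(1) by (simp add: zero_le_mult_iff)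
    moreover have "\<omega> y \<ge> \<omega> xs + d\<omega> xs \<bullet> (y - xs) + \<mu> / 2 * (norm (y - xs))\<^sup>2"
      by (rule strong_props(1)[OF \<omega>_sc \<omega>_grad \<omega>_lip mu_pos L\<omega>_pos])
    moreover have "\<mu> / 2 * (norm (y - xs))\<^sup>2 \<ge> 0" using mu_pos by simp
    ultimately show "ereal (\<omega> xs) \<le> ereal (\<omega> y)" by simp
  qed
  have ba: "(\<lambda>k. \<beta> k / \<alpha> k) \<longlonglongrightarrow> 0"
  proof (rule LIMSEQ_I)
    fix \<epsilon> :: real assume ep: "\<epsilon> > 0"
    have "eventually (\<lambda>k. ereal (\<beta> k / \<alpha> k) < ereal \<epsilon>) sequentially"
      by (rule Limsup_lessD) (use h1 ep in simp)
    then obtain N where N: "\<And>k. k \<ge> N \<Longrightarrow> \<beta> k / \<alpha> k < \<epsilon>" unfolding eventually_sequentially by auto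
    show "\<exists>no. \<forall>n\<ge>no. norm (\<beta> n / \<alpha> n - 0) < \<epsilon>"
    proof (intro exI allI impI)
      fix n assume n: "n \<ge> N"
      have p: "\<beta> n / \<alpha> n > 0" using \<alpha>_range[of n] \<beta>_range[of n] by simp
      have q: "\<beta> n / \<alpha> n < \<epsilon>" using N n by blast
      show "norm (\<beta> n / \<alpha> n - 0) < \<epsilon>" using p q by simp
    qed
  qed
  have dd: "(\<lambda>k. (\<bar>\<beta> (Suc k) - \<beta> k\<bar> + \<bar>\<alpha> (Suc k) - \<alpha> k\<bar>) / \<alpha> (Suc k)) \<longlonglongrightarrow> 0"
  proof (rule LIMSEQ_I)
    fix \<epsilon> :: real assume ep: "\<epsilon> > 0"
    have "eventually (\<lambda>k. ereal ((\<bar>\<beta> k - \<beta> (k - 1)\<bar> + \<bar>\<alpha> k - \<alpha> (k - 1)\<bar>) / (\<alpha> k * \<beta> k)) < ereal \<epsilon>) sequentially"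
      by (rule Limsup_lessD) (use h4 ep in simp)
    then obtain N where N: "\<And>k. k \<ge> N \<Longrightarrow> (\<bar>\<beta> k - \<beta> (k - 1)\<bar> + \<bar>\<alpha> k - \<alpha> (k - 1)\<bar>) / (\<alpha> k * \<beta> k) < \<epsilon>"
      unfolding eventually_sequentially by auto
    show "\<exists>no. \<forall>n\<ge>no. norm ((\<bar>\<beta> (Suc n) - \<beta> n\<bar> + \<bar>\<alpha> (Suc n) - \<alpha> n\<bar>) / \<alpha> (Suc n) - 0) < \<epsilon>"
    proof (intro exI allI impI)
      fix n assume n: "n \<ge> N"
      define X where "X = \<bar>\<beta> (Suc n) - \<beta> n\<bar> + \<bar>\<alpha> (Suc n) - \<alpha> n\<bar>"
      have X0: "X \<ge> 0" by (simp add: X_def)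
      have a: "0 < \<alpha> (Suc n)" and b: "0 < \<beta> (Suc n)" "\<beta> (Suc n) < 1" using \<alpha>_range \<beta>_range by auto
      have "X / (\<alpha> (Suc n) * \<beta> (Suc n)) < \<epsilon>" using N[of "Suc n"] n by (simp add: X_def)
      moreover have "X / \<alpha> (Suc n) \<le> X / (\<alpha> (Suc n) * \<beta> (Suc n))"
        using a b X0 by (intro divide_left_mono) (auto intro: mult_left_le_one_le simp: mult_pos_pos)
      moreover have "X / \<alpha> (Suc n) \<ge> 0" using X0 a by simp
      ultimately show "norm (X / \<alpha> (Suc n) - 0) < \<epsilon>" by simp
    qed
  qed
  have it: "\<And>k. x (Suc k) = \<alpha> k *\<^sub>R S (x k) + ((1 - \<alpha> k) * \<beta> k) *\<^sub>R T (x k) + ((1 - \<alpha> k) * (1 - \<beta> k)) *\<^sub>R W (x k)"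
    using x_iter by (simp add: S_def T_def W_def)
  have conv: "x \<longlonglongrightarrow> xs"
    by (rule iter_conv[OF r Sc Tn Wn Wxs vi \<alpha>_range \<beta>_range h2 h3 ba dd it])
  show ?thesis
    unfolding Let_def
  proof (intro exI[of _ xs] conjI allI impI)
    show "prox (\<lambda>v. ereal s * g2 v) (xs - s *\<^sub>R df2 xs) = xs" using Wxs by (simp add: W_def)
    show "\<And>y. prox (\<lambda>v. ereal s * g2 v) (y - s *\<^sub>R df2 y) = y \<Longrightarrow> 0 \<le> (xs - (xs - u *\<^sub>R d\<omega> xs)) \<bullet> (y - xs)"
      using vi by (simp add: W_def S_def)
    show "xs \<in> argmin_on (\<lambda>y. ereal (\<omega> y)) (argmin_on (\<lambda>y. ereal (f2 y) + g2 y) UNIV)"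
      using amin by (simp add: Y_def)
    show "x \<longlonglongrightarrow> xs" by (rule conv)
    fix z assume "prox (\<lambda>v. ereal s * g2 v) (z - s *\<^sub>R df2 z) = z \<and>
        (\<forall>y. prox (\<lambda>v. ereal s * g2 v) (y - s *\<^sub>R df2 y) = y \<longrightarrow> 0 \<le> (z - (z - u *\<^sub>R d\<omega> z)) \<bullet> (y - z))"
    hence "W z = z" "\<forall>y. W y = y \<longrightarrow> (z - S z) \<bullet> (y - z) \<ge> 0" by (simp_all add: W_def S_def)
    then show "z = xs" by (rule uniq)
  qed
qed

end
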